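(* Let $G\in\mathcal{G}_3$ be simply connected and suppose every interior edge of $G$ has even degree. Then $G$ can be properly vertex colored with $4$ colors.
   Context: All graphs are finite simple graphs $G=(V,E)$. For a vertex $x$, $S(x)$ is the subgraph induced by the neighbors of $x$. A graph is contractible if it is $K_1$, or, inductively, if there is a vertex $x$ with both $S(x)$ and the subgraph induced by $V\setminus\{x\}$ contractible. $\mathcal{G}_0$: graphs without edges; $\mathcal{S}_0$: those with two vertices; $\mathcal{B}_0$: those with one vertex. For $d\ge1$: $\mathcal{G}_d$ is the class of graphs in which every $S(x)$ lies in $\mathcal{S}_{d-1}\cup\mathcal{B}_{d-1}$; the boundary is the subgraph induced by vertices with $S(x)\in\mathcal{B}_{d-1}$, and the interior must be nonempty; $\mathcal{B}_d$: contractible graphs in $\mathcal{G}_d$ with boundary in $\mathcal{S}_{d-1}$; $\mathcal{S}_d$: non-contractible graphs in $\mathcal{G}_d$ such that removing any single vertex yields a graph in $\mathcal{B}_d$. For $G\in\mathcal{G}_3$ and an edge $e=(a,b)$, the degree of $e$ is the number of vertices of $S(a)\cap S(b)$ (the number of tetrahedra containing $e$); $e$ is interior if $S(a)\cap S(b)$ is a cycle graph. A closed path is a sequence $x_0,x_1,\dots,x_n=x_0$ of vertices with consecutive ones adjacent; two closed paths are homotopic if one can be transformed into the other by finitely many steps of the following types and their inverses: replacing a backtrack $a,b,a$ by $a$ (or $a,a$ by $a$), and replacing $a,b,c$ by $a,c$ when $(a,b,c)$ is a triangle. $G$ is simply connected if it is connected and every closed path is homotopic to a constant path. *)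

theory Defs
  imports Main
begin

type_synonym 'a graph = "'a set \<times> ('a \<times> 'a) set"

definition verts :: "'a graph \<Rightarrow> 'a set" where "verts G = fst G"
definition edges :: "'a graph \<Rightarrow> ('a \<times> 'a) set" where "edges G = snd G"

definition simple_graph :: "'a graph \<Rightarrow> bool" where
  "simple_graph G \<longleftrightarrow> finite (verts G) \<and> edges G \<subseteq> verts G \<times> verts G
     \<and> sym (edges G) \<and> irrefl (edges G)"

definition induce :: "'a graph \<Rightarrow> 'a set \<Rightarrow> 'a graph" where
  "induce G W = (W \<inter> verts G, edges G \<inter> ((W \<inter> verts G) \<times> (W \<inter> verts G)))"

definition nbrs :: "'a graph \<Rightarrow> 'a \<Rightarrow> 'a set" where
  "nbrs G x = {y \<in> verts G. (x, y) \<in> edges G}"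

definition sphere :: "'a graph \<Rightarrow> 'a \<Rightarrow> 'a graph" where
  "sphere G x = induce G (nbrs G x)"

inductive contractible :: "'a graph \<Rightarrow> bool" where
  K1: "simple_graph G \<Longrightarrow> card (verts G) = 1 \<Longrightarrow> contractible G"
| step: "simple_graph G \<Longrightarrow> x \<in> verts G \<Longrightarrow> contractible (sphere G x)
          \<Longrightarrow> contractible (induce G (verts G - {x})) \<Longrightarrow> contractible G"

definition boundary_verts :: "('a graph \<Rightarrow> bool) \<Rightarrow> 'a graph \<Rightarrow> 'a set" where
  "boundary_verts Bp G = {x \<in> verts G. Bp (sphere G x)}"

definition interior_verts :: "('a graph \<Rightarrow> bool) \<Rightarrow> 'a graph \<Rightarrow> 'a set" where
  "interior_verts Bp G = verts G - boundary_verts Bp G"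

definition in_G_step :: "('a graph \<Rightarrow> bool) \<Rightarrow> ('a graph \<Rightarrow> bool) \<Rightarrow> 'a graph \<Rightarrow> bool" where
  "in_G_step Sp Bp G \<longleftrightarrow> simple_graph G
     \<and> (\<forall>x \<in> verts G. Sp (sphere G x) \<or> Bp (sphere G x))
     \<and> interior_verts Bp G \<noteq> {}"

fun SB :: "nat \<Rightarrow> ('a graph \<Rightarrow> bool) \<times> ('a graph \<Rightarrow> bool)" where
  "SB 0 = ((\<lambda>G. simple_graph G \<and> edges G = {} \<and> card (verts G) = 2),
           (\<lambda>G. simple_graph G \<and> edges G = {} \<and> card (verts G) = 1))"
| "SB (Suc d) =
    (let Sp = fst (SB d); Bp = snd (SB d);
         Bn = (\<lambda>G. contractible G \<and> in_G_step Sp Bp G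
                    \<and> Sp (induce G (boundary_verts Bp G)))
     in ((\<lambda>G. in_G_step Sp Bp G \<and> \<not> contractible G
                \<and> (\<forall>x \<in> verts G. Bn (induce G (verts G - {x})))), Bn))"

definition S_class :: "nat \<Rightarrow> 'a graph \<Rightarrow> bool" where "S_class d = fst (SB d)"
definition B_class :: "nat \<Rightarrow> 'a graph \<Rightarrow> bool" where "B_class d = snd (SB d)"

definition G_class :: "nat \<Rightarrow> 'a graph \<Rightarrow> bool" where
  "G_class d G = (if d = 0 then simple_graph G \<and> edges G = {}
                  else in_G_step (S_class (d - 1)) (B_class (d - 1)) G)"

text \<open>Intersection S(a) \<inter> S(b) of the two induced subgraphs (= induced on common neighbours).\<close>
definition edge_link :: "'a graph \<Rightarrow> 'a \<Rightarrow> 'a \<Rightarrow> 'a graph" where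
  "edge_link G a b = induce G (nbrs G a \<inter> nbrs G b)"

definition edge_degree :: "'a graph \<Rightarrow> 'a \<Rightarrow> 'a \<Rightarrow> nat" where
  "edge_degree G a b = card (verts (edge_link G a b))"

definition connected_graph :: "'a graph \<Rightarrow> bool" where
  "connected_graph G \<longleftrightarrow> verts G \<noteq> {} \<and>
     (\<forall>x \<in> verts G. \<forall>y \<in> verts G. (x, y) \<in> (edges G)\<^sup>*)"

definition cycle_graph :: "'a graph \<Rightarrow> bool" where
  "cycle_graph G \<longleftrightarrow> simple_graph G \<and> connected_graph G
     \<and> (\<forall>x \<in> verts G. card (nbrs G x) = 2)"

definition interior_edge :: "'a graph \<Rightarrow> 'a \<Rightarrow> 'a \<Rightarrow> bool" where
  "interior_edge G a b \<longleftrightarrow> (a, b) \<in> edges G \<and> cycle_graph (edge_link G a b)"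

definition closed_path :: "'a graph \<Rightarrow> 'a list \<Rightarrow> bool" where
  "closed_path G xs \<longleftrightarrow> xs \<noteq> [] \<and> set xs \<subseteq> verts G \<and> hd xs = last xs
     \<and> (\<forall>i. Suc i < length xs \<longrightarrow> (xs ! i, xs ! Suc i) \<in> edges G)"

inductive htp_step :: "'a graph \<Rightarrow> 'a list \<Rightarrow> 'a list \<Rightarrow> bool" for G where
  backtrack: "(a, b) \<in> edges G \<Longrightarrow> htp_step G (us @ [a, b, a] @ vs) (us @ [a] @ vs)"
| repeat: "a \<in> verts G \<Longrightarrow> htp_step G (us @ [a, a] @ vs) (us @ [a] @ vs)"
| triangle: "(a, b) \<in> edges G \<Longrightarrow> (b, c) \<in> edges G \<Longrightarrow> (a, c) \<in> edges G \<Longrightarrow>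
     htp_step G (us @ [a, b, c] @ vs) (us @ [a, c] @ vs)"

definition homotopic :: "'a graph \<Rightarrow> 'a list \<Rightarrow> 'a list \<Rightarrow> bool" where
  "homotopic G = (\<lambda>xs ys. htp_step G xs ys \<or> htp_step G ys xs)\<^sup>*\<^sup>*"

definition simply_connected :: "'a graph \<Rightarrow> bool" where
  "simply_connected G \<longleftrightarrow> connected_graph G \<and>
     (\<forall>xs. closed_path G xs \<longrightarrow> (\<exists>x. homotopic G xs [x]))"

definition colorable :: "nat \<Rightarrow> 'a graph \<Rightarrow> bool" where
  "colorable k G \<longleftrightarrow> (\<exists>c :: 'a \<Rightarrow> nat. (\<forall>v \<in> verts G. c v < k)
     \<and> (\<forall>(a, b) \<in> edges G. c a \<noteq> c b))"

end

theory Submission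
  imports Defs
begin


lemma sg_fin: "simple_graph G \<Longrightarrow> finite (verts G)" by (simp add: simple_graph_def)
lemma sg_sub: "simple_graph G \<Longrightarrow> (a,b) \<in> edges G \<Longrightarrow> a \<in> verts G \<and> b \<in> verts G"
  by (auto simp: simple_graph_def)
lemma sg_sym: "simple_graph G \<Longrightarrow> (a,b) \<in> edges G \<Longrightarrow> (b,a) \<in> edges G"
  by (auto simp: simple_graph_def sym_def)
lemma sg_irr: "simple_graph G \<Longrightarrow> (a,a) \<notin> edges G"
  by (auto simp: simple_graph_def irrefl_def)

lemma verts_induce[simp]: "verts (induce G W) = W \<inter> verts G"
  by (simp add: induce_def verts_def)
lemma edges_induce[simp]: "edges (induce G W) = edges G \<inter> ((W \<inter> verts G) \<times> (W \<inter> verts G))"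
  by (simp add: induce_def edges_def)

lemma sg_induce: "simple_graph G \<Longrightarrow> simple_graph (induce G W)"
  by (auto simp: simple_graph_def sym_def irrefl_def)

lemma nbrs_sub: "nbrs G x \<subseteq> verts G" by (auto simp: nbrs_def)

lemma nbrs_iff: "simple_graph G \<Longrightarrow> y \<in> nbrs G x \<longleftrightarrow> (x,y) \<in> edges G"
  by (auto simp: nbrs_def dest: sg_sub)

lemma nbrs_induce: "y \<in> W \<Longrightarrow> y \<in> verts G \<Longrightarrow> nbrs (induce G W) y = nbrs G y \<inter> W"
  by (auto simp: nbrs_def)

lemma nbrs_induce_sub: "nbrs (induce G W) y \<subseteq> nbrs G y"
  by (auto simp: nbrs_def)

lemma verts_sphere[simp]: "verts (sphere G x) = nbrs G x"
  using nbrs_sub[of G x] by (auto simp: sphere_def)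
lemma edges_sphere: "edges (sphere G x) = edges G \<inter> (nbrs G x \<times> nbrs G x)"
  using nbrs_sub[of G x] by (auto simp: sphere_def)

lemma sg_sphere: "simple_graph G \<Longrightarrow> simple_graph (sphere G x)"
  by (simp add: sphere_def sg_induce)

lemma nbrs_sphere: "y \<in> nbrs G b \<Longrightarrow> nbrs (sphere G b) y = nbrs G b \<inter> nbrs G y"
  using nbrs_sub by (auto simp: nbrs_def sphere_def)

lemma induce_induce: "induce (induce G W) U = induce G (U \<inter> W)"
  by (auto simp: induce_def verts_def edges_def)

lemma sphere_sphere: "y \<in> nbrs G b \<Longrightarrow> sphere (sphere G b) y = edge_link G b y"
proof -
  assume y: "y \<in> nbrs G b"
  have "nbrs (sphere G b) y = nbrs G b \<inter> nbrs G y" using nbrs_sphere[OF y] .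
  then show ?thesis unfolding sphere_def edge_link_def
    by (simp add: induce_induce[of G "nbrs G b"] Int_commute inf_left_commute sphere_def)
qed

lemma edges_sphere_induce_sub: "edges (sphere (induce G W) y) \<subseteq> edges (sphere G y)"
  using nbrs_induce_sub[of G W y] nbrs_sub[of G y] nbrs_sub[of "induce G W" y]
  by (auto simp: edges_sphere)

fun chain :: "('a \<times> 'a) set \<Rightarrow> 'a list \<Rightarrow> bool" where
  "chain R (x # y # xs) = ((x,y) \<in> R \<and> chain R (y # xs))"
| "chain R _ = True"

lemma chain_nth: "chain R xs \<longleftrightarrow> (\<forall>i. Suc i < length xs \<longrightarrow> (xs ! i, xs ! Suc i) \<in> R)"
proof (induction R xs rule: chain.induct)
  case (1 R x y xs)
  show ?case
  proof
    assume "chain R (x # y # xs)"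
    then show "\<forall>i. Suc i < length (x # y # xs) \<longrightarrow> ((x # y # xs) ! i, (x # y # xs) ! Suc i) \<in> R"
      using 1 by (auto simp: nth_Cons split: nat.splits)
  next
    assume h: "\<forall>i. Suc i < length (x # y # xs) \<longrightarrow> ((x # y # xs) ! i, (x # y # xs) ! Suc i) \<in> R"
    have "(x,y) \<in> R" using h[rule_format, of 0] by simp
    moreover have "\<forall>i. Suc i < length (y # xs) \<longrightarrow> ((y # xs) ! i, (y # xs) ! Suc i) \<in> R"
      using h by (metis Suc_less_eq length_Cons nth_Cons_Suc)
    ultimately show "chain R (x # y # xs)" using 1 by simp
  qed
qed auto

lemma chain_append_cons: "chain R (us @ x # vs) \<longleftrightarrow> chain R (us @ [x]) \<and> chain R (x # vs)"
proof (induction us)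
  case (Cons u us) thus ?case by (cases us) auto
qed simp

lemma chain_snoc: "chain R (us @ [x, y]) \<longleftrightarrow> chain R (us @ [x]) \<and> (x,y) \<in> R"
  using chain_append_cons[of R us x "[y]"] by simp

lemma chain_restrict: "chain R xs \<Longrightarrow> set xs \<subseteq> S \<Longrightarrow> chain (R \<inter> S \<times> S) xs"
  by (induction R xs rule: chain.induct) auto

lemma chain_mono: "chain R xs \<Longrightarrow> R \<subseteq> R' \<Longrightarrow> chain R' xs"
  by (induction R xs rule: chain.induct) auto

lemma chain_rev: "sym R \<Longrightarrow> chain R xs \<Longrightarrow> chain R (rev xs)"
proof (induction R xs rule: chain.induct)
  case (1 R x y xs)
  then have "chain R (rev xs @ [y])" by simp
  moreover have "(y,x) \<in> R" using 1 by (auto simp: sym_def)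
  ultimately show ?case using chain_snoc[of R "rev xs" y x] by simp
qed auto

lemma rtrancl_chain: "(x,y) \<in> R\<^sup>* \<Longrightarrow> \<exists>p. p \<noteq> [] \<and> hd p = x \<and> last p = y \<and> chain R p
   \<and> set p \<subseteq> insert x (snd ` R)"
proof (induction rule: rtrancl_induct)
  case base then show ?case by (intro exI[of _ "[x]"]) auto
next
  case (step y z)
  then obtain p where p: "p \<noteq> []" "hd p = x" "last p = y" "chain R p" "set p \<subseteq> insert x (snd ` R)" by blast
  obtain q where q: "p = q @ [y]" using p by (metis append_butlast_last_id)
  have "chain R (p @ [z])" using p q step chain_snoc[of R q y z] by simp
  moreover have "z \<in> snd ` R" using step by force
  ultimately show ?case using p by (intro exI[of _ "p @ [z]"]) auto
qed

lemma closed_path_chain: "closed_path G xs \<longleftrightarrow> xs \<noteq> [] \<and> set xs \<subseteq> verts G \<and> hd xs = last xs \<and> chain (edges G) xs"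
  by (simp add: closed_path_def chain_nth)



lemma hom_refl: "homotopic G xs xs" by (simp add: homotopic_def)
lemma hom_trans: "homotopic G xs ys \<Longrightarrow> homotopic G ys zs \<Longrightarrow> homotopic G xs zs"
  unfolding homotopic_def by (rule rtranclp_trans)
lemma hom_step: "htp_step G xs ys \<Longrightarrow> homotopic G xs ys"
  unfolding homotopic_def by auto
lemma hom_step': "htp_step G ys xs \<Longrightarrow> homotopic G xs ys"
  unfolding homotopic_def by auto

lemma step_cong: "htp_step G xs ys \<Longrightarrow> htp_step G (p @ xs @ s) (p @ ys @ s)"
proof (induction rule: htp_step.induct)
  case (backtrack a b us vs)
  then show ?case using htp_step.backtrack[of a b G "p @ us" "vs @ s"] by simp
next
  case (repeat a us vs)
  then show ?case using htp_step.repeat[of a G "p @ us" "vs @ s"] by simp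
next
  case (triangle a b c us vs)
  then show ?case using htp_step.triangle[of a b G c "p @ us" "vs @ s"] by simp
qed

lemma hom_cong: "homotopic G xs ys \<Longrightarrow> homotopic G (p @ xs @ s) (p @ ys @ s)"
  unfolding homotopic_def
proof (induction rule: rtranclp_induct)
  case base then show ?case by simp
next
  case (step y z)
  have "htp_step G (p@y@s) (p@z@s) \<or> htp_step G (p@z@s) (p@y@s)" using step(2) step_cong by blast
  then show ?case by (rule rtranclp.rtrancl_into_rtrancl[OF step.IH])
qed

lemma step_mono: "htp_step G' xs ys \<Longrightarrow> edges G' \<subseteq> edges G \<Longrightarrow> verts G' \<subseteq> verts G \<Longrightarrow> htp_step G xs ys"
proof (induction rule: htp_step.induct)
  case (backtrack a b us vs)
  then show ?case using htp_step.backtrack[of a b G us vs] by auto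
next
  case (repeat a us vs)
  then show ?case using htp_step.repeat[of a G us vs] by auto
next
  case (triangle a b c us vs)
  then show ?case using htp_step.triangle[of a b G c us vs] by auto
qed

lemma hom_mono: "homotopic G' xs ys \<Longrightarrow> edges G' \<subseteq> edges G \<Longrightarrow> verts G' \<subseteq> verts G \<Longrightarrow> homotopic G xs ys"
  unfolding homotopic_def
proof (induction rule: rtranclp_induct)
  case base then show ?case by simp
next
  case (step y z)
  have "htp_step G y z \<or> htp_step G z y" using step step_mono[of G' y z G] step_mono[of G' z y G] by blast
  then show ?case by (rule rtranclp.rtrancl_into_rtrancl[OF step.IH[OF step.prems]])
qed

lemma step_ends: "htp_step G xs ys \<Longrightarrow> xs \<noteq> [] \<and> ys \<noteq> [] \<and> hd xs = hd ys \<and> last xs = last ys"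
  by (induction rule: htp_step.induct) (auto simp: hd_append last_append)

lemma hom_ends: "homotopic G xs ys \<Longrightarrow> xs \<noteq> [] \<Longrightarrow> ys \<noteq> [] \<and> hd ys = hd xs \<and> last ys = last xs"
  unfolding homotopic_def
proof (induction rule: rtranclp_induct)
  case base then show ?case by simp
next
  case (step y z)
  then show ?case using step_ends[of G y z] step_ends[of G z y] by auto
qed

lemma fan:
  assumes sg: "simple_graph G"
  shows "chain (edges G) (u # rs) \<Longrightarrow> set (u # rs) \<subseteq> nbrs G x \<Longrightarrow> homotopic G [u, x] (u # rs @ [x])"
proof (induction rs arbitrary: u)
  case Nil then show ?case by (simp add: hom_refl)
next
  case (Cons t rs)
  have ut: "(u,t) \<in> edges G" using Cons by simp
  have tx: "(t,x) \<in> edges G" using Cons sg by (auto simp: nbrs_iff sg_sym)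
  have ux: "(u,x) \<in> edges G" using Cons sg by (auto simp: nbrs_iff sg_sym)
  have 1: "homotopic G [u,x] [u,t,x]"
    using htp_step.triangle[OF ut tx ux, of "[]" "[]"] hom_step' by simp
  have "homotopic G [t,x] (t # rs @ [x])" using Cons by simp
  then have "homotopic G ([u] @ [t,x] @ []) ([u] @ (t # rs @ [x]) @ [])" by (rule hom_cong)
  then show ?case using 1 hom_trans by fastforce
qed

lemma detour:
  assumes sg: "simple_graph G" and c: "chain (edges G) (u # rs)" and s: "set (u # rs) \<subseteq> nbrs G x"
    and l: "last (u # rs) = w"
  shows "homotopic G [u, x, w] (u # rs)"
proof -
  have "homotopic G ([] @ [u,x] @ [w]) ([] @ (u # rs @ [x]) @ [w])"
    by (rule hom_cong) (rule fan[OF sg c s])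
  moreover obtain zs where zs: "u # rs = zs @ [w]" using l by (metis append_butlast_last_id list.simps(3))
  moreover have "(w,x) \<in> edges G" using s l sg
    by (metis last_in_set list.simps(3) nbrs_iff sg_sym subsetD)
  then have "homotopic G (zs @ [w,x,w] @ []) (zs @ [w] @ [])"
    using htp_step.backtrack hom_step by metis
  moreover have "u # rs @ [x,w] = zs @ [w,x,w]"
  proof -
    have "(u#rs) @ [x,w] = (zs@[w]) @ [x,w]" using zs by simp
    then show ?thesis by simp
  qed
  ultimately have "homotopic G [u,x,w] (zs @ [w])" using hom_trans by fastforce
  then show ?thesis using zs by simp
qed

lemma path_in_sphere:
  assumes sg: "simple_graph G" and con: "connected_graph (sphere G x)"
    and u: "u \<in> nbrs G x" and w: "w \<in> nbrs G x"
  shows "\<exists>rs. chain (edges G) (u # rs) \<and> set (u # rs) \<subseteq> nbrs G x \<and> last (u # rs) = w"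
proof -
  have "(u,w) \<in> (edges (sphere G x))\<^sup>*" using con u w by (auto simp: connected_graph_def)
  then obtain p where p: "p \<noteq> []" "hd p = u" "last p = w" "chain (edges (sphere G x)) p"
     "set p \<subseteq> insert u (snd ` edges (sphere G x))" using rtrancl_chain by metis
  have "set p \<subseteq> nbrs G x" using p(5) u by (auto simp: edges_sphere)
  moreover have "chain (edges G) p" using p(4) by (rule chain_mono) (auto simp: edges_sphere)
  moreover obtain rs where "p = u # rs" using p by (cases p) auto
  ultimately show ?thesis using p by auto
qed



lemma chain_ConsD: "chain R (x # xs) \<Longrightarrow> chain R xs" by (cases xs) auto

lemma chain_appendD: "chain R (xs @ ys) \<Longrightarrow> chain R xs \<and> chain R ys"
proof (induction xs)
  case Nil thus ?case by simp
next
  case (Cons x xs) thus ?case by (cases xs) (auto dest: chain_ConsD)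
qed

lemma avoid:
  assumes sg: "simple_graph G" and con: "connected_graph (sphere G x)"
  shows "chain (edges G) xs \<Longrightarrow> set xs \<subseteq> verts G \<Longrightarrow> xs \<noteq> [] \<Longrightarrow> hd xs \<noteq> x \<Longrightarrow> last xs \<noteq> x \<Longrightarrow>
    \<exists>ys. homotopic G xs ys \<and> chain (edges G) ys \<and> set ys \<subseteq> verts G - {x} \<and> ys \<noteq> [] \<and> hd ys = hd xs \<and> last ys = last xs"
proof (induction "count_list xs x" arbitrary: xs rule: less_induct)
  case less
  show ?case
  proof (cases "x \<in> set xs")
    case False
    then show ?thesis using less.prems by (intro exI[of _ xs]) (auto simp: hom_refl)
  next
    case True
    then obtain p q where pq: "xs = p @ x # q" "x \<notin> set p" using split_list_first by metis
    have "p \<noteq> []" using pq less.prems by auto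
    then obtain p' u where p: "p = p' @ [u]" by (metis append_butlast_last_id)
    have "q \<noteq> []" using pq less.prems by auto
    then obtain w q' where q: "q = w # q'" by (cases q) auto
    have xs: "xs = p' @ [u,x,w] @ q'" using pq p q by simp
    have ch1: "chain (edges G) (p' @ [u])" and ux: "(u,x) \<in> edges G" and xw: "(x,w) \<in> edges G"
      and ch2: "chain (edges G) (w # q')"
      using less.prems(1) unfolding xs using chain_append_cons[of "edges G" p' u "x # w # q'"] by auto
    have un: "u \<in> nbrs G x" and wn: "w \<in> nbrs G x" using ux xw sg by (auto simp: nbrs_iff sg_sym)
    obtain rs where rs: "chain (edges G) (u # rs)" "set (u # rs) \<subseteq> nbrs G x" "last (u # rs) = w"
      using path_in_sphere[OF sg con un wn] by blast
    obtain zs where zs: "u # rs = zs @ [w]" using rs(3) by (metis append_butlast_last_id list.simps(3))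
    define xs1 where "xs1 = p' @ (u # rs) @ q'"
    have h1: "homotopic G xs xs1" unfolding xs xs1_def by (rule hom_cong) (rule detour[OF sg rs])
    have c1: "chain (edges G) (p' @ u # rs)" using ch1 rs(1) chain_append_cons[of "edges G" p' u rs] by simp
    have e1: "p' @ u # rs = p' @ zs @ [w]" using zs by simp
    have xs1': "xs1 = (p' @ zs) @ w # q'" unfolding xs1_def using zs by simp
    have "chain (edges G) ((p' @ zs) @ [w])" using c1 e1 by simp
    then have c2: "chain (edges G) xs1" unfolding xs1' using ch2 chain_append_cons[of "edges G" "p' @ zs" w q'] by simp
    have xn: "x \<notin> nbrs G x" using sg by (simp add: nbrs_iff sg_irr)
    have "x \<notin> set (u # rs)" using rs(2) xn by blast
    then have cnt: "count_list xs1 x < count_list xs x"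
      unfolding xs1_def xs using pq(2) p by simp
    have s1: "set xs1 \<subseteq> verts G" using less.prems(2) rs(2) nbrs_sub[of G x] unfolding xs1_def xs by auto
    have ne: "xs1 \<noteq> []" unfolding xs1_def by simp
    have hd1: "hd xs1 = hd xs" unfolding xs1_def xs by (cases p') auto
    have l1: "last xs1 = last xs" unfolding xs1' xs by (cases q') auto
    obtain ys where ys: "homotopic G xs1 ys" "chain (edges G) ys" "set ys \<subseteq> verts G - {x}" "ys \<noteq> []"
       "hd ys = hd xs1" "last ys = last xs1"
      using less.hyps[OF cnt c2 s1 ne] hd1 l1 less.prems by auto
    have "homotopic G xs ys" using hom_trans[OF h1 ys(1)] .
    then show ?thesis using ys hd1 l1 by auto
  qed
qed

lemma reroute:
  assumes sg: "simple_graph G" and x: "x \<in> verts G" and con: "connected_graph (sphere G x)"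
    and ne: "nbrs G x \<noteq> {}" and sc: "simply_connected (induce G (verts G - {x}))"
  shows "simply_connected G"
proof -
  define G' where "G' = induce G (verts G - {x})"
  have vG': "verts G' = verts G - {x}" by (simp add: G'_def Int_absorb2 Diff_subset)
  have eG': "edges G' = edges G \<inter> ((verts G - {x}) \<times> (verts G - {x}))"
    by (simp add: G'_def Int_absorb2 Diff_subset)
  have cG': "connected_graph G'" and scG': "\<forall>xs. closed_path G' xs \<longrightarrow> (\<exists>z. homotopic G' xs [z])"
    using sc by (auto simp: simply_connected_def G'_def)
  obtain n where n: "n \<in> nbrs G x" using ne by blast
  have nx: "n \<noteq> x" using n sg by (auto simp: nbrs_iff sg_irr)
  have nV: "n \<in> verts G" using n nbrs_sub[of G x] by blast
  have xn: "(x,n) \<in> edges G" "(n,x) \<in> edges G" using n sg by (auto simp: nbrs_iff sg_sym)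
  have mono: "(edges G')\<^sup>* \<subseteq> (edges G)\<^sup>*" using eG' by (intro rtrancl_mono) auto
  have ton: "(v,n) \<in> (edges G)\<^sup>* \<and> (n,v) \<in> (edges G)\<^sup>*" if v: "v \<in> verts G" for v
  proof (cases "v = x")
    case True then show ?thesis using xn by auto
  next
    case False
    then have "(v,n) \<in> (edges G')\<^sup>* \<and> (n,v) \<in> (edges G')\<^sup>*" using cG' v nV nx vG'
      by (auto simp: connected_graph_def)
    then show ?thesis using mono by auto
  qed
  have conn: "connected_graph G" unfolding connected_graph_def
  proof (intro conjI ballI)
    show "verts G \<noteq> {}" using x by auto
    fix v w assume "v \<in> verts G" "w \<in> verts G"
    then have "(v,n) \<in> (edges G)\<^sup>*" "(n,w) \<in> (edges G)\<^sup>*" using ton by auto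
    then show "(v,w) \<in> (edges G)\<^sup>*" by (rule rtrancl_trans)
  qed
  have hm: "homotopic G' xs ys \<Longrightarrow> homotopic G xs ys" for xs ys
    using hom_mono[of G' xs ys G] eG' vG' by auto
  have inG': "\<exists>z. homotopic G ys [z]" if "chain (edges G) ys" "set ys \<subseteq> verts G - {x}" "ys \<noteq> []"
    "hd ys = last ys" for ys
  proof -
    have "chain (edges G') ys" unfolding eG' by (rule chain_restrict[OF that(1) that(2)])
    then have "closed_path G' ys" unfolding closed_path_chain vG' using that by simp
    then show ?thesis using scG' hm by blast
  qed
  have "\<exists>z. homotopic G xs [z]" if cp: "closed_path G xs" for xs
  proof -
    have xs: "xs \<noteq> []" "set xs \<subseteq> verts G" "hd xs = last xs" "chain (edges G) xs"
      using cp by (auto simp: closed_path_chain)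
    show ?thesis
    proof (cases "hd xs = x")
      case False
      then obtain ys where "homotopic G xs ys" "chain (edges G) ys" "set ys \<subseteq> verts G - {x}" "ys \<noteq> []"
        "hd ys = hd xs" "last ys = last xs" using avoid[OF sg con xs(4) xs(2) xs(1)] xs(3) False by auto
      then obtain z where "homotopic G ys [z]" using inG' xs(3) by metis
      then show ?thesis using hom_trans \<open>homotopic G xs ys\<close> by blast
    next
      case True
      show ?thesis
      proof (cases "xs = [x]")
        case True then show ?thesis using hom_refl by blast
      next
        case False
        obtain r where r: "xs = x # r" using xs(1) \<open>hd xs = x\<close> by (cases xs) auto
        have "r \<noteq> []" using r False by auto
        have lr: "last r = x" using xs(3) r \<open>r \<noteq> []\<close> True by simp
        obtain m where m: "r = m @ [x]" using lr \<open>r \<noteq> []\<close> by (metis append_butlast_last_id)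
        have "m \<noteq> []" using xs(4) r m sg by (auto simp: sg_irr)
        have chm: "chain (edges G) (x # m @ [x])" using xs(4) r m by simp
        obtain u m0 where um: "m = u # m0" using \<open>m \<noteq> []\<close> by (cases m) auto
        have ux: "(x,u) \<in> edges G" using chm um by simp
        obtain m1 w where mw: "m = m1 @ [w]" using \<open>m \<noteq> []\<close> by (metis append_butlast_last_id)
        have wx: "(w,x) \<in> edges G" using chm mw chain_append_cons[of "edges G" "x # m1" w "[x]"] by simp
        have chm': "chain (edges G) m"
          using chain_appendD[of "edges G" "[x]" "m @ [x]"] chm chain_appendD[of "edges G" m "[x]"] by simp
        have un: "u \<in> nbrs G x" and wn: "w \<in> nbrs G x" using ux wx sg by (auto simp: nbrs_iff sg_sym)
        have ux': "u \<noteq> x" "w \<noteq> x" using un wn sg by (auto simp: nbrs_iff sg_irr)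
        have sm: "set m \<subseteq> verts G" using xs(2) r m by auto
        have lm: "last m = w" using mw by simp
        have hm0: "hd m = u" using um by simp
        have "\<exists>ys. homotopic G m ys \<and> chain (edges G) ys \<and> set ys \<subseteq> verts G - {x} \<and> ys \<noteq> [] \<and> hd ys = u \<and> last ys = w"
          using avoid[OF sg con chm' sm \<open>m \<noteq> []\<close>] hm0 lm ux' by simp
        then obtain m' where m': "homotopic G m m'" "chain (edges G) m'" "set m' \<subseteq> verts G - {x}" "m' \<noteq> []"
          "hd m' = u" "last m' = w" by blast
        have h1: "homotopic G xs ([x] @ m' @ [x])" unfolding r m using hom_cong[OF m'(1), of "[x]" "[x]"] by simp
        obtain rs where rs: "chain (edges G) (w # rs)" "set (w # rs) \<subseteq> nbrs G x" "last (w # rs) = u"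
          using path_in_sphere[OF sg con wn un] by blast
        obtain m2 where m2: "m' = m2 @ [w]" using m' by (metis append_butlast_last_id)
        have "homotopic G ((x # m2) @ [w,x] @ []) ((x # m2) @ (w # rs @ [x]) @ [])"
          by (rule hom_cong) (rule fan[OF sg rs(1) rs(2)])
        then have h2: "homotopic G ([x] @ m' @ [x]) ([x] @ (m2 @ w # rs) @ [x])" using m2 by simp
        define c where "c = m2 @ w # rs"
        have cc: "chain (edges G) c" unfolding c_def using m'(2) m2 rs(1) chain_append_cons by metis
        have cs: "set c \<subseteq> verts G - {x}" unfolding c_def using m'(3) m2 rs(2) nbrs_sub[of G x] sg
          by (auto simp: nbrs_iff sg_irr)
        have chd: "hd c = u" unfolding c_def using m'(5) m2 by (cases m2) auto
        have clast: "last c = u" unfolding c_def using rs(3) by (simp add: last_append)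
        obtain z where z: "homotopic G c [z]" using inG'[OF cc cs] chd clast unfolding c_def by auto
        have "z = u" using hom_ends[OF z] chd c_def by auto
        then have h3: "homotopic G ([x] @ c @ [x]) ([x] @ [u] @ [x])" using hom_cong[OF z, of "[x]" "[x]"] by simp
        have h4: "homotopic G ([] @ [x,u,x] @ []) ([] @ [x] @ [])"
          using htp_step.backtrack[OF ux] hom_step by metis
        have "homotopic G xs [x]" using hom_trans[OF hom_trans[OF hom_trans[OF h1 h2] h3[unfolded c_def]] ] h4 by simp
        then show ?thesis by blast
      qed
    qed
  qed
  then show ?thesis using conn by (simp add: simply_connected_def)
qed



lemma S0: "S_class 0 G \<longleftrightarrow> simple_graph G \<and> edges G = {} \<and> card (verts G) = 2"
  by (simp add: S_class_def)
lemma B0: "B_class 0 G \<longleftrightarrow> simple_graph G \<and> edges G = {} \<and> card (verts G) = 1"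
  by (simp add: B_class_def)
lemma SSuc: "S_class (Suc d) G \<longleftrightarrow> in_G_step (S_class d) (B_class d) G \<and> \<not> contractible G
   \<and> (\<forall>x\<in>verts G. B_class (Suc d) (induce G (verts G - {x})))"
  by (simp add: S_class_def B_class_def Let_def)
lemma BSuc: "B_class (Suc d) G \<longleftrightarrow> contractible G \<and> in_G_step (S_class d) (B_class d) G
   \<and> S_class d (induce G (boundary_verts (B_class d) G))"
  by (simp add: S_class_def B_class_def Let_def)

lemma in_G_ne: "in_G_step S B G \<Longrightarrow> verts G \<noteq> {}"
  by (auto simp: in_G_step_def interior_verts_def)

lemma contr_basic: "contractible G \<Longrightarrow> simple_graph G \<and> verts G \<noteq> {}"
  by (induction rule: contractible.induct) auto

lemma contr_sc: "contractible G \<Longrightarrow> simply_connected G"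
proof (induction rule: contractible.induct)
  case (K1 G)
  then obtain v where v: "verts G = {v}" by (auto simp: card_Suc_eq)
  have "connected_graph G" using v by (simp add: connected_graph_def)
  moreover have "\<exists>z. homotopic G xs [z]" if "closed_path G xs" for xs
  proof -
    have xs: "xs \<noteq> []" "set xs \<subseteq> {v}" "chain (edges G) xs" using that v by (auto simp: closed_path_chain)
    obtain t where t: "xs = v # t" using xs by (cases xs) auto
    have "t = []"
    proof (rule ccontr)
      assume "t \<noteq> []"
      then obtain t' where "t = v # t'" using xs t by (cases t) auto
      then have "(v,v) \<in> edges G" using xs t by simp
      then show False using K1 sg_irr by metis
    qed
    then show ?thesis using t hom_refl by blast
  qed
  ultimately show ?case by (simp add: simply_connected_def)
next
  case (step G x)
  have "connected_graph (sphere G x)" using step by (simp add: simply_connected_def)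
  moreover have "nbrs G x \<noteq> {}" using contr_basic[OF step(3)] by simp
  ultimately show ?case using reroute[OF step(1) step(2)] step by blast
qed

lemma contr_edgeless: "contractible G \<Longrightarrow> edges G = {} \<Longrightarrow> card (verts G) = 1"
proof (induction rule: contractible.cases)
  case (step G x)
  then obtain y where "y \<in> nbrs G x" using contr_basic by fastforce
  then have "(x,y) \<in> edges G" by (simp add: nbrs_def)
  then show ?case using step by simp
qed simp

definition bipartite :: "'a graph \<Rightarrow> bool" where
  "bipartite G \<longleftrightarrow> (\<exists>h::'a \<Rightarrow> bool. \<forall>(v,w)\<in>edges G. h v \<noteq> h w)"

lemma bip_iff: "bipartite G \<longleftrightarrow> (\<exists>h::'a \<Rightarrow> bool. \<forall>v w. (v,w) \<in> edges G \<longrightarrow> h v \<noteq> h w)"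
  unfolding bipartite_def by (simp add: case_prod_beta Ball_def split_paired_All)

lemma contr_bip: "contractible G \<Longrightarrow> (\<forall>y\<in>verts G. edges (sphere G y) = {}) \<Longrightarrow> bipartite G"
proof (induction rule: contractible.induct)
  case (K1 G)
  then obtain v where v: "verts G = {v}" by (auto simp: card_Suc_eq)
  have "edges G = {}"
  proof (rule ccontr)
    assume "edges G \<noteq> {}"
    then obtain a b where ab: "(a,b) \<in> edges G" by auto
    then have "a = v" "b = v" using sg_sub[OF K1(1) ab] v by auto
    then show False using ab sg_irr[OF K1(1)] by simp
  qed
  then show ?case by (simp add: bipartite_def)
next
  case (step G x)
  let ?G' = "induce G (verts G - {x})"
  have "edges (sphere ?G' y) = {}" if "y \<in> verts ?G'" for y
  proof -
    have "y \<in> verts G" using that by simp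
    then have "edges (sphere G y) = {}" using step(7) by blast
    then show ?thesis using edges_sphere_induce_sub[of G "verts G - {x}" y] by blast
  qed
  then have "bipartite ?G'" using step(6) by blast
  then obtain h :: "'a \<Rightarrow> bool" where h: "\<forall>v w. (v,w) \<in> edges ?G' \<longrightarrow> h v \<noteq> h w" unfolding bip_iff by blast
  have "edges (sphere G x) = {}" using step(7) step(2) by blast
  then have "card (verts (sphere G x)) = 1" by (rule contr_edgeless[OF step(3)])
  then have "card (nbrs G x) = 1" by simp
  then obtain n where n: "nbrs G x = {n}" by (auto simp: card_Suc_eq)
  define h' where "h' = h(x := \<not> h n)"
  have xn: "(x,n) \<in> edges G" using n nbrs_iff[OF step(1)] by blast
  have nx: "n \<noteq> x" using xn sg_irr[OF step(1)] by blast
  have "h' v \<noteq> h' w" if vw: "(v,w) \<in> edges G" for v w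
  proof -
    have vw': "v \<in> verts G" "w \<in> verts G" using sg_sub[OF step(1) vw] by auto
    have vnw: "v \<noteq> w" using sg_irr[OF step(1)] vw by blast
    show ?thesis
    proof (cases "v = x")
      case True
      then have "w \<in> nbrs G x" using vw nbrs_iff[OF step(1)] by blast
      then have "w = n" using n by blast
      then show ?thesis using True nx h'_def by simp
    next
      case False
      show ?thesis
      proof (cases "w = x")
        case True
        then have "v \<in> nbrs G x" using vw nbrs_iff[OF step(1)] sg_sym[OF step(1)] by blast
        then have "v = n" using n by blast
        then show ?thesis using True nx h'_def by simp
      next
        case False
        then have "(v,w) \<in> edges ?G'" using vw vw' \<open>v \<noteq> x\<close> by simp
        then have "h v \<noteq> h w" using h by blast
        then show ?thesis using False \<open>v \<noteq> x\<close> h'_def by simp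
      qed
    qed
  qed
  then show ?case unfolding bip_iff by blast
qed

lemma conn_extend:
  assumes sg: "simple_graph G" and x: "x \<in> verts G" and c: "connected_graph (induce G (verts G - {x}))"
    and n: "n \<in> nbrs G x"
  shows "connected_graph G"
proof -
  let ?G' = "induce G (verts G - {x})"
  have nx: "n \<noteq> x" using n sg by (auto simp: nbrs_iff sg_irr)
  have nV: "n \<in> verts G" using n nbrs_sub[of G x] by blast
  have xn: "(x,n) \<in> edges G" "(n,x) \<in> edges G" using n sg by (auto simp: nbrs_iff sg_sym)
  have mono: "(edges ?G')\<^sup>* \<subseteq> (edges G)\<^sup>*" by (intro rtrancl_mono) auto
  have ton: "(v,n) \<in> (edges G)\<^sup>* \<and> (n,v) \<in> (edges G)\<^sup>*" if v: "v \<in> verts G" for v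
  proof (cases "v = x")
    case True then show ?thesis using xn by auto
  next
    case False
    then have "(v,n) \<in> (edges ?G')\<^sup>* \<and> (n,v) \<in> (edges ?G')\<^sup>*" using c v nV nx
      by (auto simp: connected_graph_def)
    then show ?thesis using mono by auto
  qed
  show ?thesis unfolding connected_graph_def
  proof (intro conjI ballI)
    show "verts G \<noteq> {}" using x by auto
    fix v w assume "v \<in> verts G" "w \<in> verts G"
    then have "(v,n) \<in> (edges G)\<^sup>*" "(n,w) \<in> (edges G)\<^sup>*" using ton by auto
    then show "(v,w) \<in> (edges G)\<^sup>*" by (rule rtrancl_trans)
  qed
qed

lemma sphere_card_S0B0: "S_class 0 H \<or> B_class 0 H \<Longrightarrow> card (verts H) \<ge> 1 \<and> edges H = {}"
  by (auto simp: S0 B0)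

lemma B1_facts: "B_class 1 L \<Longrightarrow> contractible L \<and> simple_graph L \<and> connected_graph L \<and> bipartite L
   \<and> (\<forall>y\<in>verts L. nbrs L y \<noteq> {})"
proof -
  assume b: "B_class 1 L"
  have c: "contractible L" and ig: "in_G_step (S_class 0) (B_class 0) L" using b BSuc[of 0 L] by auto
  have sg: "simple_graph L" using ig by (simp add: in_G_step_def)
  have sp: "\<forall>y\<in>verts L. card (nbrs L y) \<ge> 1 \<and> edges (sphere L y) = {}"
    using ig sphere_card_S0B0 by (fastforce simp: in_G_step_def)
  have "bipartite L" using contr_bip[OF c] sp by blast
  moreover have "connected_graph L" using contr_sc[OF c] by (simp add: simply_connected_def)
  moreover have "\<forall>y\<in>verts L. nbrs L y \<noteq> {}" using sp by fastforce
  ultimately show ?thesis using c sg by blast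
qed

lemma S1_facts: "S_class 1 L \<Longrightarrow> simple_graph L \<and> connected_graph L \<and> (\<forall>x\<in>verts L. card (nbrs L x) = 2)
   \<and> (\<forall>x\<in>verts L. B_class 1 (induce L (verts L - {x})))"
proof -
  assume s: "S_class 1 L"
  have ig: "in_G_step (S_class 0) (B_class 0) L" and rm: "\<forall>x\<in>verts L. B_class 1 (induce L (verts L - {x}))"
    using s SSuc[of 0 L] by auto
  have sg: "simple_graph L" using ig by (simp add: in_G_step_def)
  obtain v where v: "v \<in> verts L" using in_G_ne[OF ig] by blast
  have sp: "\<forall>y\<in>verts L. S_class 0 (sphere L y) \<or> B_class 0 (sphere L y)" using ig by (simp add: in_G_step_def)
  have "card (nbrs L v) \<ge> 1" using sp v sphere_card_S0B0 by fastforce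
  then obtain n where n: "n \<in> nbrs L v" by fastforce
  have "B_class 1 (induce L (verts L - {v}))" using rm v by blast
  then have "connected_graph (induce L (verts L - {v}))" using B1_facts by blast
  then have con: "connected_graph L" using conn_extend[OF sg v _ n] by blast
  have deg: "card (nbrs L x) = 2" if x: "x \<in> verts L" for x
  proof (cases "S_class 0 (sphere L x)")
    case True then show ?thesis by (simp add: S0)
  next
    case False
    then have "card (nbrs L x) = 1" using sp x by (auto simp: B0)
    then obtain u where u: "nbrs L x = {u}" by (auto simp: card_Suc_eq)
    have uV: "u \<in> verts L" using u nbrs_sub[of L x] by blast
    have ux: "u \<noteq> x" using u sg by (metis insertI1 nbrs_iff sg_irr)
    let ?L' = "induce L (verts L - {u})"
    have bl: "B_class 1 ?L'" using rm uV by blast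
    then have ig': "in_G_step (S_class 0) (B_class 0) ?L'" using BSuc[of 0 ?L'] by auto
    have xL': "x \<in> verts ?L'" using x ux by simp
    have "card (nbrs ?L' x) \<ge> 1" using ig' xL' sphere_card_S0B0 by (fastforce simp: in_G_step_def)
    moreover have "nbrs ?L' x = {}" using nbrs_induce[of x "verts L - {u}" L] x ux u by auto
    ultimately show ?thesis by simp
  qed
  show ?thesis using sg con deg rm by blast
qed



lemma count_side:
  assumes fin: "finite V" and sub: "E \<subseteq> V \<times> V" and sy: "\<And>a b. (a,b) \<in> E \<Longrightarrow> (b,a) \<in> E"
    and pr: "\<And>a b. (a,b) \<in> E \<Longrightarrow> h a \<noteq> h b"
  shows "(\<Sum>y\<in>{y\<in>V. h y}. card {z. (y,z) \<in> E}) = (\<Sum>y\<in>{y\<in>V. \<not> h y}. card {z. (y,z) \<in> E})"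
proof -
  let ?A = "{y\<in>V. h y}" and ?B = "{y\<in>V. \<not> h y}"
  have fz: "finite {z. (y,z) \<in> E}" for y
    using finite_subset[OF _ fin, of "{z. (y,z) \<in> E}"] sub by auto
  have "(\<Sum>y\<in>?A. card {z. (y,z) \<in> E}) = card (Sigma ?A (\<lambda>y. {z. (y,z) \<in> E}))"
    using fin fz by (simp add: card_SigmaI)
  moreover have "(\<Sum>y\<in>?B. card {z. (y,z) \<in> E}) = card (Sigma ?B (\<lambda>y. {z. (y,z) \<in> E}))"
    using fin fz by (simp add: card_SigmaI)
  moreover have "(\<lambda>(a,b). (b,a)) ` Sigma ?A (\<lambda>y. {z. (y,z) \<in> E}) = Sigma ?B (\<lambda>y. {z. (y,z) \<in> E})"
  proof (rule set_eqI, rule iffI)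
    fix p assume "p \<in> (\<lambda>(a,b). (b,a)) ` Sigma ?A (\<lambda>y. {z. (y,z) \<in> E})"
    then obtain a b where p: "p = (b,a)" "h a" "(a,b) \<in> E" by auto
    have "(b,a) \<in> E" using sy p(3) .
    moreover have "\<not> h b" using pr[OF p(3)] p(2) by simp
    moreover have "b \<in> V" using sub p(3) by auto
    ultimately show "p \<in> Sigma ?B (\<lambda>y. {z. (y,z) \<in> E})" using p(1) by simp
  next
    fix p assume "p \<in> Sigma ?B (\<lambda>y. {z. (y,z) \<in> E})"
    then obtain b a where p: "p = (b,a)" "\<not> h b" "(b,a) \<in> E" by auto
    then have "(a,b) \<in> E" "h a" using sy pr by blast+
    moreover have "a \<in> V" using sub \<open>(a,b) \<in> E\<close> by auto
    ultimately have "(a,b) \<in> Sigma ?A (\<lambda>y. {z. (y,z) \<in> E})" by simp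
    then have "(\<lambda>(a,b). (b,a)) (a,b) \<in> (\<lambda>(a,b). (b,a)) ` Sigma ?A (\<lambda>y. {z. (y,z) \<in> E})" by (rule imageI)
    then show "p \<in> (\<lambda>(a,b). (b,a)) ` Sigma ?A (\<lambda>y. {z. (y,z) \<in> E})" using p by simp
  qed
  moreover have "inj_on (\<lambda>(a,b). (b,a)) X" for X :: "('a \<times> 'a) set" by (auto simp: inj_on_def)
  ultimately show ?thesis using card_image[of "\<lambda>(a,b). (b,a)" "Sigma ?A (\<lambda>y. {z. (y,z) \<in> E})"] by simp
qed

lemma S1_even_bip:
  assumes s: "S_class 1 L" and ev: "even (card (verts L))"
  shows "bipartite L"
proof -
  have sg: "simple_graph L" and deg: "\<forall>x\<in>verts L. card (nbrs L x) = 2"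
    and rm: "\<forall>x\<in>verts L. B_class 1 (induce L (verts L - {x}))"
    using S1_facts[OF s] by auto
  have ig: "in_G_step (S_class 0) (B_class 0) L" using s SSuc[of 0 L] by auto
  obtain v where v: "v \<in> verts L" using in_G_ne[OF ig] by blast
  have "card (nbrs L v) = 2" using deg v by blast
  then obtain u w where uw: "nbrs L v = {u,w}" "u \<noteq> w" by (metis card_2_iff)
  let ?L' = "induce L (verts L - {v})"
  have "B_class 1 ?L'" using rm v by blast
  then have "bipartite ?L'" using B1_facts by blast
  then obtain h :: "'a \<Rightarrow> bool" where h: "\<forall>a b. (a,b) \<in> edges ?L' \<longrightarrow> h a \<noteq> h b" unfolding bip_iff by blast
  define V' where "V' = verts L - {v}"
  define E' where "E' = edges ?L'"
  have fin: "finite V'" using sg V'_def by (simp add: sg_fin)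
  have E'sub: "E' \<subseteq> V' \<times> V'" unfolding E'_def V'_def by auto
  have E'sym: "(a,b) \<in> E' \<Longrightarrow> (b,a) \<in> E'" for a b unfolding E'_def using sg_sym[OF sg] by auto
  have E'pr: "(a,b) \<in> E' \<Longrightarrow> h a \<noteq> h b" for a b unfolding E'_def using h by blast
  have uwV: "u \<in> V'" "w \<in> V'" using uw nbrs_sub[of L v] sg V'_def by (auto simp: nbrs_iff sg_irr)
  have Esub: "\<forall>a b. (a,b) \<in> edges L \<longrightarrow> a \<in> verts L \<and> b \<in> verts L" using sg_sub[OF sg] by blast
  have degf: "card {z. (y,z) \<in> E'} = (if y \<in> {u,w} then 1 else 2)" if y: "y \<in> V'" for y
  proof -
    have yV: "y \<in> verts L" "y \<noteq> v" using y V'_def by auto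
    have e1: "{z. (y,z) \<in> E'} = nbrs L y - {v}" unfolding E'_def nbrs_def using yV Esub by auto
    have "v \<in> nbrs L y \<longleftrightarrow> (y,v) \<in> edges L" by (rule nbrs_iff[OF sg])
    also have "\<dots> \<longleftrightarrow> (v,y) \<in> edges L" using sg_sym[OF sg] by blast
    also have "\<dots> \<longleftrightarrow> y \<in> nbrs L v" by (rule nbrs_iff[OF sg, symmetric])
    finally have e2: "v \<in> nbrs L y \<longleftrightarrow> y \<in> {u,w}" using uw(1) by simp
    have e3: "card (nbrs L y) = 2" using deg yV by blast
    show ?thesis
    proof (cases "y \<in> {u,w}")
      case True
      then have "v \<in> nbrs L y" using e2 by blast
      then show ?thesis using True e1 e3 by (simp add: card_Diff_singleton)
    next
      case False
      then have "v \<notin> nbrs L y" using e2 by blast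
      then have "nbrs L y - {v} = nbrs L y" by blast
      then show ?thesis using False e1 e3 by simp
    qed
  qed
  have cs: "(\<Sum>y\<in>{y\<in>V'. h y}. card {z. (y,z) \<in> E'}) = (\<Sum>y\<in>{y\<in>V'. \<not> h y}. card {z. (y,z) \<in> E'})"
    by (rule count_side[OF fin E'sub E'sym E'pr])
  have side: "(\<Sum>y\<in>{y\<in>V'. P y}. card {z. (y,z) \<in> E'}) = 1 + 2 * (card {y\<in>V'. P y} - 1)"
    if "P a" "\<not> P b" "{a,b} = {u,w}" for P a b
  proof -
    have ab: "a \<in> V'" "b \<in> V'" "a \<noteq> b" using that uwV uw(2) by (auto simp: doubleton_eq_iff)
    let ?S = "{y\<in>V'. P y}"
    have fS: "finite ?S" using fin by simp
    have aS: "a \<in> ?S" using ab that by simp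
    have "(\<Sum>y\<in>?S. card {z. (y,z) \<in> E'}) = card {z. (a,z) \<in> E'} + (\<Sum>y\<in>?S - {a}. card {z. (y,z) \<in> E'})"
      using sum.remove[OF fS aS] by simp
    moreover have "card {z. (a,z) \<in> E'} = 1" using degf ab that by auto
    moreover have "(\<Sum>y\<in>?S - {a}. card {z. (y,z) \<in> E'}) = (\<Sum>y\<in>?S - {a}. 2)"
    proof (rule sum.cong)
      fix y assume "y \<in> ?S - {a}"
      then have "y \<in> V'" "y \<notin> {u,w}" using that by auto
      then show "card {z. (y,z) \<in> E'} = 2" using degf by simp
    qed simp
    moreover have "card (?S - {a}) = card ?S - 1" using aS fS by simp
    ultimately show ?thesis by simp
  qed
  have huw: "h u = h w"
  proof (rule ccontr)
    assume ne: "h u \<noteq> h w"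
    obtain a b where ab: "h a" "\<not> h b" "{a,b} = {u,w}"
    proof (cases "h u")
      case True then show ?thesis using that[of u w] ne by simp
    next
      case False then show ?thesis using that[of w u] ne by (simp add: insert_commute)
    qed
    have s1: "(\<Sum>y\<in>{y\<in>V'. h y}. card {z. (y,z) \<in> E'}) = 1 + 2 * (card {y\<in>V'. h y} - 1)"
      using side[of h a b] ab by simp
    have s2: "(\<Sum>y\<in>{y\<in>V'. \<not> h y}. card {z. (y,z) \<in> E'}) = 1 + 2 * (card {y\<in>V'. \<not> h y} - 1)"
      using side[of "\<lambda>y. \<not> h y" b a] ab by (simp add: insert_commute)
    have abV: "a \<in> V'" "b \<in> V'" using ab(3) uwV by (auto simp: doubleton_eq_iff)
    have f1: "finite {y\<in>V'. h y}" "finite {y\<in>V'. \<not> h y}" using fin by auto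
    have m1: "a \<in> {y\<in>V'. h y}" "b \<in> {y\<in>V'. \<not> h y}" using abV ab by auto
    have ne1: "card {y\<in>V'. h y} \<ge> 1" "card {y\<in>V'. \<not> h y} \<ge> 1"
      using card_gt_0_iff[of "{y\<in>V'. h y}"] card_gt_0_iff[of "{y\<in>V'. \<not> h y}"] f1 m1 by auto
    have "card {y\<in>V'. h y} = card {y\<in>V'. \<not> h y}" using s1 s2 cs ne1 by simp
    moreover have "card V' = card {y\<in>V'. h y} + card {y\<in>V'. \<not> h y}"
    proof -
      have "V' = {y\<in>V'. h y} \<union> {y\<in>V'. \<not> h y}" by auto
      then show ?thesis using fin card_Un_disjoint[of "{y\<in>V'. h y}" "{y\<in>V'. \<not> h y}"] by auto
    qed
    moreover have "card V' = card (verts L) - 1" using v V'_def card_Diff_singleton by metis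
    moreover have "card (verts L) \<ge> 1" using v sg_fin[OF sg] card_gt_0_iff[of "verts L"] by auto
    ultimately show False using ev by presburger
  qed
  define h' where "h' = h(v := \<not> h u)"
  have "h' a \<noteq> h' b" if ab: "(a,b) \<in> edges L" for a b
  proof -
    have abV: "a \<in> verts L" "b \<in> verts L" using sg_sub[OF sg ab] by auto
    show ?thesis
    proof (cases "a = v")
      case True
      then have "b \<in> {u,w}" using ab uw nbrs_iff[OF sg] by blast
      moreover have "b \<noteq> v" using True ab sg_irr[OF sg] by blast
      ultimately show ?thesis using True huw h'_def by auto
    next
      case False
      show ?thesis
      proof (cases "b = v")
        case True
        then have "a \<in> {u,w}" using ab uw nbrs_iff[OF sg] sg_sym[OF sg] by blast
        then show ?thesis using True False huw h'_def by auto
      next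
        case False
        then have "(a,b) \<in> edges ?L'" using ab abV \<open>a \<noteq> v\<close> by simp
        then show ?thesis using h False \<open>a \<noteq> v\<close> h'_def by simp
      qed
    qed
  qed
  then show ?thesis unfolding bip_iff by blast
qed



definition star :: "'a graph \<Rightarrow> 'a \<Rightarrow> 'a set" where "star G a = insert a (nbrs G a)"
definition agree :: "'a set \<Rightarrow> ('a \<Rightarrow> nat) \<Rightarrow> ('a \<Rightarrow> nat) \<Rightarrow> bool" where
  "agree S f g \<longleftrightarrow> (\<forall>v\<in>S. f v = g v)"

lemma chain_set: "chain R p \<Longrightarrow> p \<noteq> [] \<Longrightarrow> hd p \<in> V \<Longrightarrow> R \<subseteq> V \<times> V \<Longrightarrow> set p \<subseteq> V"
  by (induction R p rule: chain.induct) auto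

lemma hd_app_cons: "hd (us @ a # zs) = hd (us @ [a])" by (cases us) auto

locale msys =
  fixes G :: "'a graph" and Col :: "'a \<Rightarrow> ('a \<Rightarrow> nat) set"
  assumes sg: "simple_graph G"
    and ex1: "\<And>a b f. (a,b) \<in> edges G \<Longrightarrow> f \<in> Col a \<Longrightarrow> \<exists>!g. g \<in> Col b \<and> agree (star G a \<inter> star G b) g f"
    and tri: "\<And>a b c f g1 g2 g3. (a,b) \<in> edges G \<Longrightarrow> (b,c) \<in> edges G \<Longrightarrow> (a,c) \<in> edges G \<Longrightarrow>
       f \<in> Col a \<Longrightarrow> g1 \<in> Col b \<Longrightarrow> agree (star G a \<inter> star G b) g1 f \<Longrightarrow>
       g2 \<in> Col c \<Longrightarrow> agree (star G b \<inter> star G c) g2 g1 \<Longrightarrow>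
       g3 \<in> Col c \<Longrightarrow> agree (star G a \<inter> star G c) g3 f \<Longrightarrow> g2 = g3"
    and prp: "\<And>a f v. f \<in> Col a \<Longrightarrow> v \<in> nbrs G a \<Longrightarrow> f v \<noteq> f a"
begin

definition ext :: "'a \<Rightarrow> 'a \<Rightarrow> ('a \<Rightarrow> nat) \<Rightarrow> ('a \<Rightarrow> nat)" where
  "ext a b f = (if a = b then f else THE g. g \<in> Col b \<and> agree (star G a \<inter> star G b) g f)"

definition W :: "('a \<times> 'a) set" where "W = edges G \<union> {(v,v) | v. v \<in> verts G}"

lemma EW: "edges G \<subseteq> W" by (auto simp: W_def)

lemma ext_prop: "(a,b) \<in> edges G \<Longrightarrow> f \<in> Col a \<Longrightarrow> ext a b f \<in> Col b \<and> agree (star G a \<inter> star G b) (ext a b f) f"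
proof -
  assume ab: "(a,b) \<in> edges G" and f: "f \<in> Col a"
  have "a \<noteq> b" using ab sg_irr[OF sg] by blast
  then have e: "ext a b f = (THE g. g \<in> Col b \<and> agree (star G a \<inter> star G b) g f)" by (simp add: ext_def)
  show ?thesis unfolding e by (rule theI'[OF ex1[OF ab f]])
qed

lemma ext_unique: "(a,b) \<in> edges G \<Longrightarrow> f \<in> Col a \<Longrightarrow> g \<in> Col b \<Longrightarrow> agree (star G a \<inter> star G b) g f \<Longrightarrow> ext a b f = g"
proof -
  assume ab: "(a,b) \<in> edges G" and f: "f \<in> Col a" and g: "g \<in> Col b" "agree (star G a \<inter> star G b) g f"
  have "a \<noteq> b" using ab sg_irr[OF sg] by blast
  then have e: "ext a b f = (THE g. g \<in> Col b \<and> agree (star G a \<inter> star G b) g f)" by (simp add: ext_def)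
  show ?thesis unfolding e by (rule the1_equality[OF ex1[OF ab f]]) (use g in simp)
qed

lemma agree_sym: "agree S f g \<Longrightarrow> agree S g f" by (simp add: agree_def)

lemma ext_back: "(a,b) \<in> edges G \<Longrightarrow> f \<in> Col a \<Longrightarrow> ext b a (ext a b f) = f"
proof -
  assume ab: "(a,b) \<in> edges G" and f: "f \<in> Col a"
  have ba: "(b,a) \<in> edges G" using sg_sym[OF sg ab] .
  have g: "ext a b f \<in> Col b" "agree (star G a \<inter> star G b) (ext a b f) f" using ext_prop[OF ab f] by auto
  have "agree (star G b \<inter> star G a) f (ext a b f)" using agree_sym[OF g(2)] by (simp add: Int_commute)
  then show ?thesis by (rule ext_unique[OF ba g(1) f])
qed

lemma ext_tri: "(a,b) \<in> edges G \<Longrightarrow> (b,c) \<in> edges G \<Longrightarrow> (a,c) \<in> edges G \<Longrightarrow> f \<in> Col a \<Longrightarrow>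
   ext b c (ext a b f) = ext a c f"
proof -
  assume ab: "(a,b) \<in> edges G" and bc: "(b,c) \<in> edges G" and ac: "(a,c) \<in> edges G" and f: "f \<in> Col a"
  have g1: "ext a b f \<in> Col b" "agree (star G a \<inter> star G b) (ext a b f) f" using ext_prop[OF ab f] by auto
  have g2: "ext b c (ext a b f) \<in> Col c" "agree (star G b \<inter> star G c) (ext b c (ext a b f)) (ext a b f)"
    using ext_prop[OF bc g1(1)] by auto
  have g3: "ext a c f \<in> Col c" "agree (star G a \<inter> star G c) (ext a c f) f" using ext_prop[OF ac f] by auto
  show ?thesis by (rule tri[OF ab bc ac f g1 g2 g3])
qed

lemma ext_W: "(a,b) \<in> W \<Longrightarrow> f \<in> Col a \<Longrightarrow> ext a b f \<in> Col b"
proof -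
  assume ab: "(a,b) \<in> W" and f: "f \<in> Col a"
  show ?thesis
  proof (cases "a = b")
    case True then show ?thesis using f by (simp add: ext_def)
  next
    case False
    then have "(a,b) \<in> edges G" using ab by (auto simp: W_def)
    then show ?thesis using ext_prop f by blast
  qed
qed

fun tr :: "'a list \<Rightarrow> ('a \<Rightarrow> nat) \<Rightarrow> ('a \<Rightarrow> nat)" where
  "tr (x # y # xs) f = tr (y # xs) (ext x y f)"
| "tr _ f = f"

lemma tr_in: "chain W xs \<Longrightarrow> xs \<noteq> [] \<Longrightarrow> f \<in> Col (hd xs) \<Longrightarrow> tr xs f \<in> Col (last xs)"
proof (induction xs f rule: tr.induct)
  case (1 x y xs f)
  have "ext x y f \<in> Col y" using ext_W 1 by simp
  then show ?case using 1 by simp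
qed auto

lemma tr_app: "tr (us @ x # vs) f = tr (x # vs) (tr (us @ [x]) f)"
proof (induction us arbitrary: f)
  case Nil then show ?case by simp
next
  case (Cons u us)
  show ?case
  proof (cases us)
    case Nil then show ?thesis by simp
  next
    case (Cons u' us')
    then show ?thesis using Cons.IH[of "ext u u' f"] by simp
  qed
qed

lemma step_inv: "htp_step G xs ys \<Longrightarrow> (chain W xs \<longleftrightarrow> chain W ys) \<and>
   (chain W xs \<longrightarrow> (\<forall>f\<in>Col (hd xs). tr xs f = tr ys f))"
proof (induction rule: htp_step.induct)
  case (backtrack a b us vs)
  have ab: "(a,b) \<in> W" "(b,a) \<in> W" using backtrack sg_sym[OF sg] EW by auto
  have c: "chain W (us @ [a, b, a] @ vs) \<longleftrightarrow> chain W (us @ [a] @ vs)"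
    using chain_append_cons[of W us a "b # a # vs"] chain_append_cons[of W us a vs] ab by auto
  have "tr (us @ [a, b, a] @ vs) f = tr (us @ [a] @ vs) f"
    if ch: "chain W (us @ [a, b, a] @ vs)" and f: "f \<in> Col (hd (us @ [a, b, a] @ vs))" for f
  proof -
    have ch1: "chain W (us @ [a])" using ch chain_append_cons[of W us a "b # a # vs"] by auto
    have "f \<in> Col (hd (us @ [a]))" using f hd_app_cons[of us a "b # a # vs"] by simp
    then have g: "tr (us @ [a]) f \<in> Col a" using tr_in[OF ch1] by simp
    have "tr (us @ [a, b, a] @ vs) f = tr (a # vs) (ext b a (ext a b (tr (us @ [a]) f)))"
      using tr_app[of us a "b # a # vs" f] by simp
    also have "\<dots> = tr (a # vs) (tr (us @ [a]) f)" using ext_back[OF backtrack g] by simp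
    also have "\<dots> = tr (us @ [a] @ vs) f" using tr_app[of us a vs f] by simp
    finally show ?thesis .
  qed
  then show ?case using c by blast
next
  case (repeat a us vs)
  have aa: "(a,a) \<in> W" using repeat by (auto simp: W_def)
  have c: "chain W (us @ [a, a] @ vs) \<longleftrightarrow> chain W (us @ [a] @ vs)"
    using chain_append_cons[of W us a "a # vs"] chain_append_cons[of W us a vs] aa by auto
  have "tr (us @ [a, a] @ vs) f = tr (us @ [a] @ vs) f" for f
    using tr_app[of us a "a # vs" f] tr_app[of us a vs f] by (simp add: ext_def)
  then show ?case using c by blast
next
  case (triangle a b c us vs)
  have ab: "(a,b) \<in> W" "(b,c) \<in> W" "(a,c) \<in> W" using triangle EW by auto
  have c: "chain W (us @ [a, b, c] @ vs) \<longleftrightarrow> chain W (us @ [a, c] @ vs)"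
    using chain_append_cons[of W us a "b # c # vs"] chain_append_cons[of W us a "c # vs"] ab by auto
  have "tr (us @ [a, b, c] @ vs) f = tr (us @ [a, c] @ vs) f"
    if ch: "chain W (us @ [a, b, c] @ vs)" and f: "f \<in> Col (hd (us @ [a, b, c] @ vs))" for f
  proof -
    have ch1: "chain W (us @ [a])" using ch chain_append_cons[of W us a "b # c # vs"] by auto
    have "f \<in> Col (hd (us @ [a]))" using f hd_app_cons[of us a "b # c # vs"] by simp
    then have g: "tr (us @ [a]) f \<in> Col a" using tr_in[OF ch1] by simp
    have "tr (us @ [a, b, c] @ vs) f = tr (c # vs) (ext b c (ext a b (tr (us @ [a]) f)))"
      using tr_app[of us a "b # c # vs" f] by simp
    also have "\<dots> = tr (c # vs) (ext a c (tr (us @ [a]) f))" using ext_tri[OF triangle g] by simp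
    also have "\<dots> = tr (us @ [a, c] @ vs) f" using tr_app[of us a "c # vs" f] by simp
    finally show ?thesis .
  qed
  then show ?case using c by blast
qed

lemma hom_inv: "homotopic G xs ys \<Longrightarrow> xs \<noteq> [] \<Longrightarrow> chain W xs \<Longrightarrow>
   chain W ys \<and> (\<forall>f\<in>Col (hd xs). tr ys f = tr xs f)"
  unfolding homotopic_def
proof (induction rule: rtranclp_induct)
  case base then show ?case by simp
next
  case (step y z)
  have y: "chain W y" "\<forall>f\<in>Col (hd xs). tr y f = tr xs f" using step by auto
  have "y \<noteq> [] \<and> hd y = hd xs" using hom_ends[of G xs y] step unfolding homotopic_def by auto
  moreover have "(chain W y \<longleftrightarrow> chain W z) \<and> (chain W y \<longrightarrow> (\<forall>f\<in>Col (hd y). tr y f = tr z f))"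
  proof (cases "htp_step G y z")
    case True then show ?thesis using step_inv by blast
  next
    case False
    then have s: "htp_step G z y" using step by blast
    have "hd z = hd y" using step_ends[OF s] by simp
    then show ?thesis using step_inv[OF s] by auto
  qed
  ultimately show ?case using y by auto
qed

lemma tr_rev: "chain W xs \<Longrightarrow> xs \<noteq> [] \<Longrightarrow> f \<in> Col (hd xs) \<Longrightarrow> tr (rev xs) (tr xs f) = f"
proof (induction xs f rule: tr.induct)
  case (1 x y xs f)
  have xy: "(x,y) \<in> W" using 1 by simp
  have f': "ext x y f \<in> Col y" using ext_W[OF xy] 1 by simp
  have ih: "tr (rev (y # xs)) (tr (y # xs) (ext x y f)) = ext x y f" using 1 f' by simp
  have "tr (rev (x # y # xs)) (tr (x # y # xs) f) = tr (rev xs @ y # [x]) (tr (y # xs) (ext x y f))" by simp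
  also have "\<dots> = tr [y, x] (tr (rev xs @ [y]) (tr (y # xs) (ext x y f)))" by (rule tr_app)
  also have "\<dots> = ext y x (ext x y f)" using ih by simp
  also have "\<dots> = f"
  proof (cases "x = y")
    case True then show ?thesis by (simp add: ext_def)
  next
    case False
    then have "(x,y) \<in> edges G" using xy by (auto simp: W_def)
    then show ?thesis using ext_back 1 by simp
  qed
  finally show ?case .
qed auto

theorem color:
  assumes sc: "simply_connected G" and x0: "x0 \<in> verts G" and f0: "f0 \<in> Col x0"
  shows "\<exists>c. (\<forall>v w. (v,w) \<in> edges G \<longrightarrow> c v \<noteq> c w) \<and> (\<forall>v\<in>verts G. \<exists>f\<in>Col v. c v = f v)
    \<and> (\<forall>v\<in>star G x0. c v = f0 v)"
proof -
  define Pth where "Pth v = {p. p \<noteq> [] \<and> hd p = x0 \<and> last p = v \<and> chain (edges G) p}" for v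
  have Esub: "edges G \<subseteq> verts G \<times> verts G" using sg by (auto simp: simple_graph_def)
  have symE: "sym (edges G)" using sg by (auto simp: simple_graph_def)
  have ex: "Pth v \<noteq> {}" if v: "v \<in> verts G" for v
  proof -
    have "(x0,v) \<in> (edges G)\<^sup>*" using sc x0 v by (auto simp: simply_connected_def connected_graph_def)
    then obtain p where "p \<noteq> []" "hd p = x0" "last p = v" "chain (edges G) p" using rtrancl_chain by metis
    then show ?thesis unfolding Pth_def by blast
  qed
  have trP: "tr p f0 \<in> Col v" if p: "p \<in> Pth v" for p v
  proof -
    have "chain W p" using p chain_mono[OF _ EW] unfolding Pth_def by blast
    then show ?thesis using tr_in[of p f0] p f0 unfolding Pth_def by auto
  qed
  have K: "tr p f0 = tr q f0" if p: "p \<in> Pth v" and q: "q \<in> Pth v" for p q v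
  proof -
    have pp: "p \<noteq> []" "hd p = x0" "last p = v" "chain (edges G) p" using p unfolding Pth_def by auto
    have qq: "q \<noteq> []" "hd q = x0" "last q = v" "chain (edges G) q" using q unfolding Pth_def by auto
    obtain p0 where p0: "p = p0 @ [v]" using pp by (metis append_butlast_last_id)
    have rq: "rev q \<noteq> []" "hd (rev q) = v" "last (rev q) = x0" using qq by (auto simp: hd_rev last_rev)
    obtain q' where q': "rev q = v # q'" using rq by (cases "rev q") auto
    have crq: "chain (edges G) (rev q)" using chain_rev[OF symE qq(4)] .
    define r where "r = p0 @ v # q'"
    have cr: "chain (edges G) r" unfolding r_def using chain_append_cons[of "edges G" p0 v q'] pp(4) crq p0 q' by simp
    have hr: "hd r = x0" unfolding r_def using hd_app_cons[of p0 v q'] pp(2) p0 by simp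
    have lr: "last r = x0" unfolding r_def using rq(3) q' by (cases q') auto
    have sr: "set r \<subseteq> verts G" using chain_set[OF cr _ _ Esub] hr x0 unfolding r_def by simp
    have "closed_path G r" unfolding closed_path_chain using cr hr lr sr unfolding r_def by simp
    then obtain z where z: "homotopic G r [z]" using sc by (auto simp: simply_connected_def)
    have crW: "chain W r" using chain_mono[OF cr EW] .
    have "tr [z] f0 = tr r f0" using hom_inv[OF z _ crW] f0 hr unfolding r_def by auto
    then have e1: "tr r f0 = f0" by simp
    have "tr r f0 = tr (rev q) (tr p f0)" unfolding r_def using tr_app[of p0 v q' f0] p0 q' by simp
    then have e2: "tr (rev q) (tr p f0) = f0" using e1 by simp
    have cqW: "chain W (rev q)" using chain_mono[OF crq EW] .
    have g1: "tr p f0 \<in> Col v" using trP p by blast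
    have "tr (rev (rev q)) (tr (rev q) (tr p f0)) = tr p f0" using tr_rev[OF cqW rq(1)] g1 rq(2) by simp
    then show ?thesis using e2 by simp
  qed
  define c where "c v = tr (SOME p. p \<in> Pth v) f0 v" for v
  have cP: "c v = tr p f0 v" if "p \<in> Pth v" for p v
  proof -
    have "(SOME p. p \<in> Pth v) \<in> Pth v" using that by (rule someI)
    then show ?thesis unfolding c_def using K that by metis
  qed
  have prop_c: "c v \<noteq> c w" if vw: "(v,w) \<in> edges G" for v w
  proof -
    have v: "v \<in> verts G" "w \<in> verts G" using vw Esub by auto
    obtain p where p: "p \<in> Pth v" using ex[OF v(1)] by blast
    have pp: "p \<noteq> []" "hd p = x0" "last p = v" "chain (edges G) p" using p unfolding Pth_def by auto
    obtain p0 where p0: "p = p0 @ [v]" using pp by (metis append_butlast_last_id)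
    have "chain (edges G) (p0 @ [v, w])" using chain_snoc[of "edges G" p0 v w] pp(4) p0 vw by simp
    moreover have "hd (p0 @ [v, w]) = x0" using hd_app_cons[of p0 v "[w]"] pp(2) p0 by simp
    ultimately have pw: "p0 @ [v, w] \<in> Pth w" unfolding Pth_def by simp
    have g: "tr p f0 \<in> Col v" using trP p by blast
    have "tr (p0 @ [v, w]) f0 = tr [v, w] (tr p f0)" using tr_app[of p0 v "[w]" f0] p0 by simp
    also have "\<dots> = ext v w (tr p f0)" by simp
    finally have e: "c w = ext v w (tr p f0) w" using cP[OF pw] by simp
    have "w \<in> star G v \<inter> star G w" using vw sg by (auto simp: star_def nbrs_iff)
    then have "ext v w (tr p f0) w = tr p f0 w" using ext_prop[OF vw g] by (auto simp: agree_def)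
    moreover have "c v = tr p f0 v" using cP[OF p] .
    moreover have "tr p f0 w \<noteq> tr p f0 v" using prp[OF g] vw sg by (simp add: nbrs_iff)
    ultimately show ?thesis using e by simp
  qed
  have vals: "\<exists>f\<in>Col v. c v = f v" if v: "v \<in> verts G" for v
  proof -
    obtain p where p: "p \<in> Pth v" using ex[OF v] by blast
    show ?thesis using cP[OF p] trP[OF p] by blast
  qed
  have st: "c v = f0 v" if v: "v \<in> star G x0" for v
  proof (cases "v = x0")
    case True
    have "[x0] \<in> Pth x0" unfolding Pth_def by simp
    then show ?thesis using cP True by simp
  next
    case False
    then have vn: "(x0,v) \<in> edges G" using v sg by (auto simp: star_def nbrs_iff)
    have "[x0, v] \<in> Pth v" unfolding Pth_def using vn by simp
    then have "c v = ext x0 v f0 v" using cP by simp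
    moreover have "v \<in> star G x0 \<inter> star G v" using v by (simp add: star_def)
    ultimately show ?thesis using ext_prop[OF vn f0] by (auto simp: agree_def)
  qed
  show ?thesis using prop_c vals st by blast
qed

end



definition col :: "'a graph \<Rightarrow> nat set \<Rightarrow> 'a \<Rightarrow> ('a \<Rightarrow> nat) set" where
  "col G C a = {f. (\<forall>v\<in>star G a. f v \<in> C) \<and> (\<forall>v\<in>star G a. \<forall>w\<in>star G a. (v,w) \<in> edges G \<longrightarrow> f v \<noteq> f w)
     \<and> (\<forall>v. v \<notin> star G a \<longrightarrow> f v = 0)}"

lemma third:
  assumes "card C = 3" "a \<in> C" "b \<in> C" "a \<noteq> b" "x \<in> C" "y \<in> C" "x \<noteq> a" "x \<noteq> b" "y \<noteq> a" "y \<noteq> b"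
  shows "x = y"
proof (rule ccontr)
  assume "x \<noteq> y"
  have fin: "finite C" using assms(1) by (metis card.infinite zero_neq_numeral)
  have "card {a,b,x,y} = 4" using assms \<open>x \<noteq> y\<close> by simp
  moreover have "card {a,b,x,y} \<le> card C" using fin assms by (intro card_mono) auto
  ultimately show False using assms(1) by simp
qed

lemma propag:
  assumes con: "connected_graph L" and y: "y \<in> verts L" and Py: "P y"
    and st: "\<And>v w. P v \<Longrightarrow> (v,w) \<in> edges L \<Longrightarrow> P w"
  shows "\<forall>v\<in>verts L. P v"
proof
  fix v assume v: "v \<in> verts L"
  have "(y,v) \<in> (edges L)\<^sup>*" using con y v by (auto simp: connected_graph_def)
  then show "P v"
  proof (induction rule: rtrancl_induct)
    case base then show ?case using Py .
  next
    case (step a b) then show ?case using st by blast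
  qed
qed

lemma star_sub: "simple_graph H \<Longrightarrow> z \<in> verts H \<Longrightarrow> star H z \<subseteq> verts H"
  using nbrs_sub[of H z] by (auto simp: star_def)

lemma local_rigid:
  assumes sg: "simple_graph H" and z: "z \<in> verts H" and con: "connected_graph (sphere H z)"
    and c3: "card C = 3"
    and g: "\<forall>v\<in>star H z. g v \<in> C" and g': "\<forall>v\<in>star H z. g' v \<in> C"
    and pg: "\<forall>v\<in>star H z. \<forall>w\<in>star H z. (v,w) \<in> edges H \<longrightarrow> g v \<noteq> g w"
    and pg': "\<forall>v\<in>star H z. \<forall>w\<in>star H z. (v,w) \<in> edges H \<longrightarrow> g' v \<noteq> g' w"
    and y: "y \<in> nbrs H z" and ez: "g z = g' z" and ey: "g y = g' y"
  shows "\<forall>v\<in>star H z. g v = g' v"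
proof -
  have zs: "z \<in> star H z" by (simp add: star_def)
  have ns: "v \<in> nbrs H z \<Longrightarrow> v \<in> star H z" for v by (simp add: star_def)
  have "\<forall>v\<in>verts (sphere H z). g v = g' v"
  proof (rule propag[OF con])
    show "y \<in> verts (sphere H z)" using y by simp
    show "g y = g' y" by (rule ey)
  next
    fix v w assume ev: "g v = g' v" and vw: "(v,w) \<in> edges (sphere H z)"
    have vw': "v \<in> nbrs H z" "w \<in> nbrs H z" "(v,w) \<in> edges H" using vw by (auto simp: edges_sphere)
    have zw: "(z,w) \<in> edges H" "(z,v) \<in> edges H" using vw' nbrs_iff[OF sg] by auto
    have "g z \<noteq> g v" using pg zs ns[OF vw'(1)] zw by blast
    moreover have "g w \<noteq> g z" using pg zs ns[OF vw'(2)] zw sg_sym[OF sg] by blast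
    moreover have "g w \<noteq> g v" using pg ns vw' sg_sym[OF sg] by blast
    moreover have "g' w \<noteq> g' z" using pg' zs ns[OF vw'(2)] zw sg_sym[OF sg] by blast
    moreover have "g' w \<noteq> g' v" using pg' ns vw' sg_sym[OF sg] by blast
    moreover have "g z \<in> C" "g v \<in> C" "g w \<in> C" "g' w \<in> C" using g g' zs ns vw' by auto
    ultimately show "g w = g' w" using third[OF c3, of "g z" "g v" "g w" "g' w"] ez ev by simp
  qed
  then show ?thesis using ez by (auto simp: star_def)
qed

lemma global_rigid:
  assumes sg: "simple_graph H" and con: "connected_graph H" and lc: "\<forall>y\<in>verts H. connected_graph (sphere H y)"
    and c3: "card C = 3"
    and g: "\<forall>v\<in>verts H. g v \<in> C" and g': "\<forall>v\<in>verts H. g' v \<in> C"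
    and pg: "\<forall>v w. (v,w) \<in> edges H \<longrightarrow> g v \<noteq> g w"
    and pg': "\<forall>v w. (v,w) \<in> edges H \<longrightarrow> g' v \<noteq> g' w"
    and y: "y \<in> verts H" and z: "z \<in> nbrs H y" and ey: "g y = g' y" and ez: "g z = g' z"
  shows "\<forall>v\<in>verts H. g v = g' v"
proof -
  have "\<forall>v\<in>verts H. g v = g' v \<and> (\<exists>u\<in>nbrs H v. g u = g' u)"
  proof (rule propag[OF con y])
    show "g y = g' y \<and> (\<exists>u\<in>nbrs H y. g u = g' u)" using ey ez z by blast
  next
    fix v w assume P: "g v = g' v \<and> (\<exists>u\<in>nbrs H v. g u = g' u)" and vw: "(v,w) \<in> edges H"
    have v: "v \<in> verts H" using sg_sub[OF sg vw] by simp
    obtain u where u: "u \<in> nbrs H v" "g u = g' u" using P by blast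
    have ss: "star H v \<subseteq> verts H" by (rule star_sub[OF sg v])
    have "\<forall>x\<in>star H v. g x = g' x"
    proof (rule local_rigid[where g=g and g'=g' and y=u and C=C])
      show "simple_graph H" by (rule sg)
      show "v \<in> verts H" by (rule v)
      show "card C = 3" by (rule c3)
      show "u \<in> nbrs H v" by (rule u(1))
      show "g u = g' u" by (rule u(2))
      show "connected_graph (sphere H v)" using lc v by blast
      show "\<forall>x\<in>star H v. g x \<in> C" using g ss by blast
      show "\<forall>x\<in>star H v. g' x \<in> C" using g' ss by blast
      show "\<forall>x\<in>star H v. \<forall>w\<in>star H v. (x,w) \<in> edges H \<longrightarrow> g x \<noteq> g w" using pg by blast
      show "\<forall>x\<in>star H v. \<forall>w\<in>star H v. (x,w) \<in> edges H \<longrightarrow> g' x \<noteq> g' w" using pg' by blast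
      show "g v = g' v" using P by blast
    qed
    moreover have "w \<in> star H v" using vw nbrs_iff[OF sg] by (simp add: star_def)
    moreover have "v \<in> nbrs H w" using vw nbrs_iff[OF sg] sg_sym[OF sg] by blast
    ultimately show "g w = g' w \<and> (\<exists>u\<in>nbrs H w. g u = g' u)" using P by blast
  qed
  then show ?thesis by blast
qed

lemma local_exists:
  assumes sg: "simple_graph H" and bip: "bipartite (sphere H z)" and y: "y \<in> nbrs H z"
    and abc: "\<alpha> \<in> C" "\<beta> \<in> C" "\<gamma> \<in> C" "\<alpha> \<noteq> \<beta>" "\<alpha> \<noteq> \<gamma>" "\<beta> \<noteq> \<gamma>"
  shows "\<exists>g\<in>col H C z. g z = \<alpha> \<and> g y = \<beta> \<and> (\<forall>w\<in>nbrs H z. (w,y) \<in> edges H \<longrightarrow> g w = \<gamma>)"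
proof -
  obtain h :: "'a \<Rightarrow> bool" where h: "\<forall>a b. (a,b) \<in> edges (sphere H z) \<longrightarrow> h a \<noteq> h b"
    using bip unfolding bip_iff by blast
  define g where "g v = (if v = z then \<alpha> else if v \<in> nbrs H z then (if h v = h y then \<beta> else \<gamma>) else 0)" for v
  have zn: "z \<notin> nbrs H z" using sg by (simp add: nbrs_iff sg_irr)
  have yz: "y \<noteq> z" using y zn by blast
  have vals: "\<forall>v\<in>star H z. g v \<in> C" using abc by (auto simp: star_def g_def)
  have pr: "g v \<noteq> g w" if v: "v \<in> star H z" and w: "w \<in> star H z" and vw: "(v,w) \<in> edges H" for v w
  proof -
    have vnw: "v \<noteq> w" using vw sg_irr[OF sg] by blast
    show ?thesis
    proof (cases "v = z")
      case True
      then have "w \<in> nbrs H z" "w \<noteq> z" using w vnw by (auto simp: star_def)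
      then show ?thesis using True abc by (auto simp: g_def)
    next
      case False
      then have vn: "v \<in> nbrs H z" using v by (simp add: star_def)
      show ?thesis
      proof (cases "w = z")
        case True
        then show ?thesis using vn zn abc by (auto simp: g_def)
      next
        case False
        then have wn: "w \<in> nbrs H z" using w by (simp add: star_def)
        have "(v,w) \<in> edges (sphere H z)" using vn wn vw by (simp add: edges_sphere)
        then have "h v \<noteq> h w" using h by blast
        then show ?thesis using vn wn zn abc by (auto simp: g_def)
      qed
    qed
  qed
  have out: "\<forall>v. v \<notin> star H z \<longrightarrow> g v = 0" by (auto simp: star_def g_def)
  have gc: "g \<in> col H C z" unfolding col_def using vals pr out by blast
  have gy: "g y = \<beta>" using y yz by (simp add: g_def)
  have gw: "g w = \<gamma>" if w: "w \<in> nbrs H z" and wy: "(w,y) \<in> edges H" for w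
  proof -
    have "(w,y) \<in> edges (sphere H z)" using w y wy by (simp add: edges_sphere)
    then have "h w \<noteq> h y" using h by blast
    moreover have "w \<noteq> z" using w zn by blast
    ultimately show ?thesis using w by (simp add: g_def)
  qed
  have gz: "g z = \<alpha>" by (simp add: g_def)
  show ?thesis using gc gz gy gw by blast
qed

lemma card3_third: "card C = 3 \<Longrightarrow> \<alpha> \<in> C \<Longrightarrow> \<beta> \<in> C \<Longrightarrow> \<exists>\<gamma>\<in>C. \<gamma> \<noteq> \<alpha> \<and> \<gamma> \<noteq> \<beta>"
proof (rule ccontr)
  assume c: "card C = 3" "\<alpha> \<in> C" "\<beta> \<in> C" and n: "\<not> (\<exists>\<gamma>\<in>C. \<gamma> \<noteq> \<alpha> \<and> \<gamma> \<noteq> \<beta>)"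
  then have "C \<subseteq> {\<alpha>,\<beta>}" by blast
  then have "card C \<le> 2" by (metis card_2_iff card_insert_le card_mono finite.emptyI finite.insertI le_trans insert_absorb2 order_refl card_1_singleton_iff dual_order.trans)
  then show False using c by simp
qed



lemma col_prop: "f \<in> col G C a \<Longrightarrow> v \<in> star G a \<Longrightarrow> f v \<in> C"
  and col_pr: "f \<in> col G C a \<Longrightarrow> v \<in> star G a \<Longrightarrow> w \<in> star G a \<Longrightarrow> (v,w) \<in> edges G \<Longrightarrow> f v \<noteq> f w"
  and col_out: "f \<in> col G C a \<Longrightarrow> v \<notin> star G a \<Longrightarrow> f v = 0"
  by (auto simp: col_def)

lemma col_eq: "f \<in> col G C a \<Longrightarrow> g \<in> col G C a \<Longrightarrow> (\<forall>v\<in>star G a. f v = g v) \<Longrightarrow> f = g"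
proof
  fix v assume f: "f \<in> col G C a" and g: "g \<in> col G C a" and e: "\<forall>v\<in>star G a. f v = g v"
  show "f v = g v" using e col_out[OF f, of v] col_out[OF g, of v] by (cases "v \<in> star G a") auto
qed

lemma in_star: "v \<in> star G a \<longleftrightarrow> v = a \<or> v \<in> nbrs G a" by (simp add: star_def)

lemma local_rigid_col:
  assumes sg: "simple_graph H" and z: "z \<in> verts H" and con: "connected_graph (sphere H z)"
    and c3: "card C = 3" and g: "g \<in> col H C z" and g': "g' \<in> col H C z"
    and y: "y \<in> nbrs H z" and ez: "g z = g' z" and ey: "g y = g' y"
  shows "g = g'"
proof -
  have "\<forall>v\<in>star H z. g v = g' v"
  proof (rule local_rigid[where g=g and g'=g' and y=y and C=C])
    show "simple_graph H" by (rule sg)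
    show "z \<in> verts H" by (rule z)
    show "card C = 3" by (rule c3)
    show "y \<in> nbrs H z" by (rule y)
    show "g z = g' z" by (rule ez)
    show "g y = g' y" by (rule ey)
    show "connected_graph (sphere H z)" by (rule con)
    show "\<forall>v\<in>star H z. g v \<in> C" using g by (simp add: col_def)
    show "\<forall>v\<in>star H z. g' v \<in> C" using g' by (simp add: col_def)
    show "\<forall>v\<in>star H z. \<forall>w\<in>star H z. (v, w) \<in> edges H \<longrightarrow> g v \<noteq> g w" using g by (simp add: col_def)
    show "\<forall>v\<in>star H z. \<forall>w\<in>star H z. (v, w) \<in> edges H \<longrightarrow> g' v \<noteq> g' w" using g' by (simp add: col_def)
  qed
  then show ?thesis by (rule col_eq[OF g g'])
qed

lemma twoD:
  assumes sg: "simple_graph H" and sc: "simply_connected H"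
    and lk: "\<forall>y\<in>verts H. connected_graph (sphere H y) \<and> bipartite (sphere H y)"
    and c3: "card (C::nat set) = 3" and y0: "y0 \<in> verts H" and z0: "z0 \<in> nbrs H y0"
    and ab: "\<alpha> \<in> C" "\<beta> \<in> C" "\<alpha> \<noteq> \<beta>"
  shows "\<exists>c. (\<forall>v\<in>verts H. c v \<in> C) \<and> (\<forall>v w. (v,w) \<in> edges H \<longrightarrow> c v \<noteq> c w) \<and> c y0 = \<alpha> \<and> c z0 = \<beta>"
proof -
  have ex1: "\<exists>!g. g \<in> col H C b \<and> agree (star H a \<inter> star H b) g f"
    if ab: "(a,b) \<in> edges H" and f: "f \<in> col H C a" for a b f
  proof -
    have aV: "a \<in> verts H" and bV: "b \<in> verts H" using sg_sub[OF sg ab] by auto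
    have an: "a \<in> nbrs H b" using ab sg_sym[OF sg] nbrs_iff[OF sg] by blast
    have bn: "b \<in> nbrs H a" using ab nbrs_iff[OF sg] by blast
    have sa: "a \<in> star H a" "b \<in> star H a" using bn by (auto simp: star_def)
    have fa: "f a \<in> C" "f b \<in> C" using col_prop[OF f] sa by auto
    have fab: "f b \<noteq> f a" using col_pr[OF f sa(2) sa(1)] ab sg_sym[OF sg] by blast
    obtain \<gamma> where g3: "\<gamma> \<in> C" "\<gamma> \<noteq> f b" "\<gamma> \<noteq> f a" using card3_third[OF c3 fa(2) fa(1)] by blast
    obtain g where g: "g \<in> col H C b" "g b = f b" "g a = f a" "\<forall>w\<in>nbrs H b. (w,a) \<in> edges H \<longrightarrow> g w = \<gamma>"
      using local_exists[OF sg _ an fa(2) fa(1) g3(1) fab g3(2)[symmetric] g3(3)[symmetric]] lk bV by blast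
    have ag: "agree (star H a \<inter> star H b) g f"
      unfolding agree_def
    proof
      fix v assume v: "v \<in> star H a \<inter> star H b"
      show "g v = f v"
      proof (cases "v = a \<or> v = b")
        case True then show ?thesis using g by auto
      next
        case False
        then have vn: "v \<in> nbrs H a" "v \<in> nbrs H b" using v by (auto simp: star_def)
        have va: "(v,a) \<in> edges H" using vn nbrs_iff[OF sg] sg_sym[OF sg] by blast
        have vb: "(v,b) \<in> edges H" using vn nbrs_iff[OF sg] sg_sym[OF sg] by blast
        have gv: "g v = \<gamma>" using g(4) vn va by blast
        have vs: "v \<in> star H a" using vn by (simp add: star_def)
        have "f v \<in> C" "f v \<noteq> f a" "f v \<noteq> f b" using col_prop[OF f vs] col_pr[OF f vs sa(1) va]
          col_pr[OF f vs sa(2) vb] by auto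
        then show ?thesis using gv third[OF c3 fa(2) fa(1) fab g3(1) _ g3(2) g3(3)] by simp
      qed
    qed
    show ?thesis
    proof (rule ex1I[of _ g])
      show "g \<in> col H C b \<and> agree (star H a \<inter> star H b) g f" using g ag by blast
    next
      fix g' assume g': "g' \<in> col H C b \<and> agree (star H a \<inter> star H b) g' f"
      have "a \<in> star H a \<inter> star H b" "b \<in> star H a \<inter> star H b" using an bn by (auto simp: star_def)
      then have "g' b = g b" "g' a = g a" using g' ag by (auto simp: agree_def)
      moreover have "connected_graph (sphere H b)" using lk bV by blast
      moreover have "g' \<in> col H C b" using g' by blast
      ultimately show "g' = g" using local_rigid_col[OF sg bV _ c3 _ g(1) an] by blast
    qed
  qed
  have tri: "g2 = g3"
    if abc: "(a,b) \<in> edges H" "(b,c) \<in> edges H" "(a,c) \<in> edges H" and f: "f \<in> col H C a"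
      and g1: "g1 \<in> col H C b" "agree (star H a \<inter> star H b) g1 f"
      and g2: "g2 \<in> col H C c" "agree (star H b \<inter> star H c) g2 g1"
      and g3: "g3 \<in> col H C c" "agree (star H a \<inter> star H c) g3 f" for a b c f g1 g2 g3
  proof -
    have n: "b \<in> nbrs H a" "c \<in> nbrs H b" "c \<in> nbrs H a" "a \<in> nbrs H b" "b \<in> nbrs H c" "a \<in> nbrs H c"
      using abc nbrs_iff[OF sg] sg_sym[OF sg] by blast+
    have cV: "c \<in> verts H" using sg_sub[OF sg abc(2)] by simp
    have "g2 c = g1 c" using g2(2) n by (auto simp: agree_def star_def)
    also have "\<dots> = f c" using g1(2) n by (auto simp: agree_def star_def)
    also have "\<dots> = g3 c" using g3(2) n by (auto simp: agree_def star_def)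
    finally have ec: "g2 c = g3 c" .
    have "g2 a = g1 a" using g2(2) n by (auto simp: agree_def star_def)
    also have "\<dots> = f a" using g1(2) n by (auto simp: agree_def star_def)
    also have "\<dots> = g3 a" using g3(2) n by (auto simp: agree_def star_def)
    finally have ea: "g2 a = g3 a" .
    show ?thesis using local_rigid_col[OF sg cV _ c3 g2(1) g3(1) n(6) ec ea] lk cV by blast
  qed
  have prp: "f v \<noteq> f a" if "f \<in> col H C a" "v \<in> nbrs H a" for a f v
    using col_pr[OF that(1), of v a] that(2) nbrs_iff[OF sg] sg_sym[OF sg] by (auto simp: star_def)
  interpret m: msys H "col H C"
    apply unfold_locales
       apply (rule sg)
      apply (rule ex1; assumption)
     apply (rule tri; assumption)
    apply (rule prp; assumption)
    done
  have y0V: "y0 \<in> verts H" by (rule y0)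
  obtain \<gamma> where g3: "\<gamma> \<in> C" "\<gamma> \<noteq> \<alpha>" "\<gamma> \<noteq> \<beta>" using card3_third[OF c3 ab(1) ab(2)] by blast
  obtain f0 where f0: "f0 \<in> col H C y0" "f0 y0 = \<alpha>" "f0 z0 = \<beta>"
    using local_exists[OF sg _ z0 ab(1) ab(2) g3(1) ab(3) g3(2)[symmetric] g3(3)[symmetric]] lk y0 by blast
  obtain c where c: "\<forall>v w. (v,w) \<in> edges H \<longrightarrow> c v \<noteq> c w" "\<forall>v\<in>verts H. \<exists>f\<in>col H C v. c v = f v"
    "\<forall>v\<in>star H y0. c v = f0 v" using m.color[OF sc y0 f0(1)] by blast
  have "c v \<in> C" if v: "v \<in> verts H" for v
  proof -
    obtain f where f: "f \<in> col H C v" "c v = f v" using c(2) v by blast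
    show ?thesis using col_prop[OF f(1), of v] f(2) by (simp add: star_def)
  qed
  then have "\<forall>v\<in>verts H. c v \<in> C" by blast
  moreover have "c y0 = \<alpha>" "c z0 = \<beta>" using c(3) f0 z0 by (auto simp: star_def)
  ultimately show ?thesis using c(1) by blast
qed



lemma cone_col:
  assumes sg: "simple_graph G" and cv: "\<forall>v\<in>nbrs G b. c v \<in> C"
    and cp: "\<forall>u v. (u,v) \<in> edges (sphere G b) \<longrightarrow> c u \<noteq> c v"
    and k: "\<kappa> \<notin> C" "\<kappa> \<in> D" and CD: "C \<subseteq> D"
  shows "(\<lambda>v. if v = b then \<kappa> else if v \<in> nbrs G b then c v else 0) \<in> col G D b"
proof -
  define g where "g = (\<lambda>v. if v = b then \<kappa> else if v \<in> nbrs G b then c v else 0)"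
  have bn: "b \<notin> nbrs G b" using sg by (simp add: nbrs_iff sg_irr)
  have vals: "\<forall>v\<in>star G b. g v \<in> D" using cv k CD by (auto simp: g_def star_def)
  have pr: "g u \<noteq> g v" if u: "u \<in> star G b" and v: "v \<in> star G b" and uv: "(u,v) \<in> edges G" for u v
  proof -
    have unv: "u \<noteq> v" using uv sg_irr[OF sg] by blast
    show ?thesis
    proof (cases "u = b")
      case True
      then have "v \<in> nbrs G b" "v \<noteq> b" using v unv by (auto simp: star_def)
      then show ?thesis using True cv k by (auto simp: g_def)
    next
      case False
      then have un: "u \<in> nbrs G b" using u by (simp add: star_def)
      show ?thesis
      proof (cases "v = b")
        case True then show ?thesis using un bn cv k by (auto simp: g_def)
      next
        case False
        then have vn: "v \<in> nbrs G b" using v by (simp add: star_def)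
        have "(u,v) \<in> edges (sphere G b)" using un vn uv by (simp add: edges_sphere)
        then have "c u \<noteq> c v" using cp by blast
        then show ?thesis using un vn bn by (auto simp: g_def)
      qed
    qed
  qed
  have out: "\<forall>v. v \<notin> star G b \<longrightarrow> g v = 0" by (auto simp: star_def g_def)
  have "g \<in> col G D b" unfolding col_def using vals pr out by blast
  then show ?thesis unfolding g_def .
qed

lemma threeD:
  assumes sg: "simple_graph G" and sc: "simply_connected G"
    and hyp: "\<forall>b\<in>verts G. simply_connected (sphere G b) \<and> (\<forall>y\<in>nbrs G b. connected_graph (sphere (sphere G b) y)
       \<and> bipartite (sphere (sphere G b) y) \<and> nbrs (sphere G b) y \<noteq> {})"
    and x0: "x0 \<in> verts G" and nx0: "nbrs G x0 \<noteq> {}"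
  shows "colorable 4 G"
proof -
  define C4 where "C4 = {0,1,2,3::nat}"
  have sH: "simple_graph (sphere G b)" for b by (rule sg_sphere[OF sg])
  have nbS: "\<And>b y. y \<in> nbrs G b \<Longrightarrow> nbrs (sphere G b) y = nbrs G b \<inter> nbrs G y" by (rule nbrs_sphere)
  have lkH: "\<forall>y\<in>verts (sphere G b). connected_graph (sphere (sphere G b) y) \<and> bipartite (sphere (sphere G b) y)"
    if b: "b \<in> verts G" for b using hyp b by simp
  have nbE: "\<And>a b. b \<in> nbrs G a \<longleftrightarrow> (a,b) \<in> edges G" by (rule nbrs_iff[OF sg])
  have c3: "card (C4 - {k}) = 3" if "k \<in> C4" for k using that unfolding C4_def by auto
  have rigid3: "g1 = g2" if g: "g1 \<in> col G C4 b" "g2 \<in> col G C4 b" and b: "b \<in> verts G"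
    and a: "a \<in> nbrs G b" and w: "w \<in> nbrs G a" "w \<in> nbrs G b"
    and e: "g1 b = g2 b" "g1 a = g2 a" "g1 w = g2 w" for g1 g2 b a w
  proof -
    let ?H = "sphere G b" and ?C = "C4 - {g1 b}"
    have bs: "b \<in> star G b" by (simp add: star_def)
    have cC: "card ?C = 3" using c3 col_prop[OF g(1) bs] by blast
    have val: "\<forall>v\<in>verts ?H. g v \<in> ?C" if gg: "g \<in> col G C4 b" and gb: "g b = g1 b" for g
    proof
      fix v assume "v \<in> verts ?H"
      then have v: "v \<in> nbrs G b" by simp
      have vs: "v \<in> star G b" using v by (simp add: star_def)
      have "g v \<in> C4" using col_prop[OF gg vs] .
      moreover have "g v \<noteq> g b" using col_pr[OF gg vs bs] v nbE sg_sym[OF sg] by blast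
      ultimately show "g v \<in> ?C" using gb by simp
    qed
    have prH: "\<forall>u v. (u,v) \<in> edges ?H \<longrightarrow> g u \<noteq> g v" if gg: "g \<in> col G C4 b" for g
    proof (intro allI impI)
      fix u v assume "(u,v) \<in> edges ?H"
      then have "u \<in> star G b" "v \<in> star G b" "(u,v) \<in> edges G" by (auto simp: edges_sphere star_def)
      then show "g u \<noteq> g v" using col_pr[OF gg] by blast
    qed
    have conH: "connected_graph ?H" using hyp b by (simp add: simply_connected_def)
    have lc: "\<forall>y\<in>verts ?H. connected_graph (sphere ?H y)" using lkH[OF b] by blast
    have aH: "a \<in> verts ?H" using a by simp
    have wH: "w \<in> nbrs ?H a" using nbS[OF a] w by simp
    have "\<forall>v\<in>verts ?H. g1 v = g2 v"
      using global_rigid[OF sH conH lc cC val[OF g(1) refl] val[OF g(2) e(1)[symmetric]] prH[OF g(1)] prH[OF g(2)]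
        aH wH e(2) e(3)] .
    then have "\<forall>v\<in>star G b. g1 v = g2 v" using e(1) by (auto simp: star_def)
    then show ?thesis by (rule col_eq[OF g])
  qed
  have ex1: "\<exists>!g. g \<in> col G C4 b \<and> agree (star G a \<inter> star G b) g f"
    if ab: "(a,b) \<in> edges G" and f: "f \<in> col G C4 a" for a b f
  proof -
    let ?H = "sphere G b"
    have aV: "a \<in> verts G" and bV: "b \<in> verts G" using sg_sub[OF sg ab] by auto
    have an: "a \<in> nbrs G b" using ab sg_sym[OF sg] nbE by blast
    have bn: "b \<in> nbrs G a" using ab nbE by blast
    obtain w where wH: "w \<in> nbrs ?H a" using hyp bV an by blast
    have w: "w \<in> nbrs G b" "w \<in> nbrs G a" using wH nbS[OF an] by auto
    have sa: "a \<in> star G a" "b \<in> star G a" "w \<in> star G a" using bn w by (auto simp: star_def)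
    let ?C = "C4 - {f b}"
    have cC: "card ?C = 3" using c3 col_prop[OF f sa(2)] by blast
    have wb: "(w,b) \<in> edges G" using w nbE sg_sym[OF sg] by blast
    have wa: "(w,a) \<in> edges G" using w nbE sg_sym[OF sg] by blast
    have fa: "f a \<in> ?C" using col_prop[OF f sa(1)] col_pr[OF f sa(1) sa(2) ab] by simp
    have fw: "f w \<in> ?C" using col_prop[OF f sa(3)] col_pr[OF f sa(3) sa(2) wb] by simp
    have faw: "f a \<noteq> f w" using col_pr[OF f sa(3) sa(1) wa] by simp
    have aH: "a \<in> verts ?H" using an by simp
    have scH: "simply_connected ?H" using hyp bV by blast
    obtain c where c: "\<forall>v\<in>verts ?H. c v \<in> ?C" "\<forall>v w. (v,w) \<in> edges ?H \<longrightarrow> c v \<noteq> c w" "c a = f a" "c w = f w"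
      using twoD[OF sH scH lkH[OF bV] cC aH wH fa fw faw] by blast
    define g where "g = (\<lambda>v. if v = b then f b else if v \<in> nbrs G b then c v else 0)"
    have gc: "g \<in> col G C4 b" unfolding g_def
    proof (rule cone_col[OF sg _ c(2)])
      show "\<forall>v\<in>nbrs G b. c v \<in> ?C" using c(1) by simp
      show "f b \<notin> ?C" by simp
      show "f b \<in> C4" using col_prop[OF f sa(2)] .
    qed auto
    have agH: "\<forall>v\<in>star ?H a. c v = f v"
    proof (rule local_rigid[where g=c and g'=f and y=w and C="?C"])
      show "simple_graph ?H" by (rule sH)
      show "a \<in> verts ?H" by (rule aH)
      show "connected_graph (sphere ?H a)" using lkH[OF bV] aH by blast
      show "card ?C = 3" by (rule cC)
      show "w \<in> nbrs ?H a" by (rule wH)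
      show "c a = f a" by (rule c(3))
      show "c w = f w" by (rule c(4))
      have sHa: "star ?H a \<subseteq> verts ?H" by (rule star_sub[OF sH aH])
      show "\<forall>v\<in>star ?H a. c v \<in> ?C" using c(1) sHa by blast
      have sub: "star ?H a \<subseteq> star G a" using nbS[OF an] by (auto simp: star_def)
      show "\<forall>v\<in>star ?H a. f v \<in> ?C"
      proof
        fix v assume v: "v \<in> star ?H a"
        then have vs: "v \<in> star G a" using sub by blast
        have "v \<in> nbrs G b" using v sHa by auto
        then have "(v,b) \<in> edges G" using nbE sg_sym[OF sg] by blast
        then show "f v \<in> ?C" using col_prop[OF f vs] col_pr[OF f vs sa(2)] by simp
      qed
      show "\<forall>v\<in>star ?H a. \<forall>u\<in>star ?H a. (v,u) \<in> edges ?H \<longrightarrow> c v \<noteq> c u" using c(2) by blast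
      show "\<forall>v\<in>star ?H a. \<forall>u\<in>star ?H a. (v,u) \<in> edges ?H \<longrightarrow> f v \<noteq> f u"
      proof (intro ballI impI)
        fix v u assume "v \<in> star ?H a" "u \<in> star ?H a" "(v,u) \<in> edges ?H"
        then have "v \<in> star G a" "u \<in> star G a" "(v,u) \<in> edges G" using sub by (auto simp: edges_sphere)
        then show "f v \<noteq> f u" using col_pr[OF f] by blast
      qed
    qed
    have ag: "agree (star G a \<inter> star G b) g f" unfolding agree_def
    proof
      fix v assume v: "v \<in> star G a \<inter> star G b"
      show "g v = f v"
      proof (cases "v = b")
        case True then show ?thesis by (simp add: g_def)
      next
        case False
        then have vb: "v \<in> nbrs G b" using v by (simp add: star_def)
        have "v \<in> star ?H a" using v vb nbS[OF an] by (auto simp: star_def)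
        then have "c v = f v" using agH by blast
        then show ?thesis using vb False by (simp add: g_def)
      qed
    qed
    show ?thesis
    proof (rule ex1I[of _ g])
      show "g \<in> col G C4 b \<and> agree (star G a \<inter> star G b) g f" using gc ag by blast
    next
      fix g' assume g': "g' \<in> col G C4 b \<and> agree (star G a \<inter> star G b) g' f"
      have ins: "b \<in> star G a \<inter> star G b" "a \<in> star G a \<inter> star G b" "w \<in> star G a \<inter> star G b"
        using an bn w by (auto simp: star_def)
      have "g' b = g b" "g' a = g a" "g' w = g w" using g' ag ins by (auto simp: agree_def)
      moreover have "g' \<in> col G C4 b" using g' by blast
      ultimately show "g' = g" using rigid3[OF _ gc bV an w(2) w(1)] by blast
    qed
  qed
  have tri: "g2 = g3"
    if abc: "(a,b) \<in> edges G" "(b,c) \<in> edges G" "(a,c) \<in> edges G" and f: "f \<in> col G C4 a"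
      and g1: "g1 \<in> col G C4 b" "agree (star G a \<inter> star G b) g1 f"
      and g2: "g2 \<in> col G C4 c" "agree (star G b \<inter> star G c) g2 g1"
      and g3: "g3 \<in> col G C4 c" "agree (star G a \<inter> star G c) g3 f" for a b c f g1 g2 g3
  proof -
    have n: "b \<in> nbrs G a" "c \<in> nbrs G b" "c \<in> nbrs G a" "a \<in> nbrs G b" "b \<in> nbrs G c" "a \<in> nbrs G c"
      using abc nbE sg_sym[OF sg] by blast+
    have cV: "c \<in> verts G" using sg_sub[OF sg abc(2)] by simp
    have "g2 c = g1 c" using g2(2) n by (auto simp: agree_def star_def)
    also have "\<dots> = f c" using g1(2) n by (auto simp: agree_def star_def)
    also have "\<dots> = g3 c" using g3(2) n by (auto simp: agree_def star_def)
    finally have ec: "g2 c = g3 c" .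
    have "g2 a = g1 a" using g2(2) n by (auto simp: agree_def star_def)
    also have "\<dots> = f a" using g1(2) n by (auto simp: agree_def star_def)
    also have "\<dots> = g3 a" using g3(2) n by (auto simp: agree_def star_def)
    finally have ea: "g2 a = g3 a" .
    have "g2 b = g1 b" using g2(2) n by (auto simp: agree_def star_def)
    also have "\<dots> = f b" using g1(2) n by (auto simp: agree_def star_def)
    also have "\<dots> = g3 b" using g3(2) n by (auto simp: agree_def star_def)
    finally have eb: "g2 b = g3 b" .
    show ?thesis by (rule rigid3[OF g2(1) g3(1) cV n(6) n(1) n(5) ec ea eb])
  qed
  have prp: "f v \<noteq> f a" if "f \<in> col G C4 a" "v \<in> nbrs G a" for a f v
    using col_pr[OF that(1), of v a] that(2) nbE sg_sym[OF sg] by (auto simp: star_def)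
  interpret m: msys G "col G C4"
    apply unfold_locales
       apply (rule sg)
      apply (rule ex1; assumption)
     apply (rule tri; assumption)
    apply (rule prp; assumption)
    done
  obtain y0 where y0: "y0 \<in> nbrs G x0" using nx0 by blast
  obtain z0 where z0: "z0 \<in> nbrs (sphere G x0) y0" using hyp x0 y0 by blast
  have c3': "card {1,2,3::nat} = 3" by simp
  have y0H: "y0 \<in> verts (sphere G x0)" using y0 by simp
  have scx: "simply_connected (sphere G x0)" using hyp x0 by blast
  obtain c0 :: "'a \<Rightarrow> nat" where c0: "\<forall>v\<in>verts (sphere G x0). c0 v \<in> {1,2,3}" "\<forall>v w. (v,w) \<in> edges (sphere G x0) \<longrightarrow> c0 v \<noteq> c0 w"
    using twoD[OF sH scx lkH[OF x0] c3' y0H z0, of 1 2] by auto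
  have f0: "(\<lambda>v. if v = x0 then 0 else if v \<in> nbrs G x0 then c0 v else 0) \<in> col G C4 x0"
  proof (rule cone_col[OF sg _ c0(2)])
    show "\<forall>v\<in>nbrs G x0. c0 v \<in> {1,2,3}" using c0(1) by simp
  qed (auto simp: C4_def)
  obtain c where c: "\<forall>v w. (v,w) \<in> edges G \<longrightarrow> c v \<noteq> c w" "\<forall>v\<in>verts G. \<exists>f\<in>col G C4 v. c v = f v"
    using m.color[OF sc x0 f0] by blast
  have "c v < 4" if v: "v \<in> verts G" for v
  proof -
    obtain f where f: "f \<in> col G C4 v" "c v = f v" using c(2) v by blast
    have "f v \<in> C4" using col_prop[OF f(1), of v] by (simp add: star_def)
    then show ?thesis using f(2) by (auto simp: C4_def)
  qed
  moreover have "\<forall>(a,b)\<in>edges G. c a \<noteq> c b" using c(1) by auto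
  ultimately show ?thesis unfolding colorable_def by blast
qed



lemma S2: "S_class 2 G \<longleftrightarrow> in_G_step (S_class 1) (B_class 1) G \<and> \<not> contractible G
   \<and> (\<forall>x\<in>verts G. B_class 2 (induce G (verts G - {x})))"
  using SSuc[of 1 G] by (simp add: numeral_2_eq_2)
lemma B2: "B_class 2 G \<longleftrightarrow> contractible G \<and> in_G_step (S_class 1) (B_class 1) G
   \<and> S_class 1 (induce G (boundary_verts (B_class 1) G))"
  using BSuc[of 1 G] by (simp add: numeral_2_eq_2)

lemma link_facts: "S_class 1 L \<or> B_class 1 L \<Longrightarrow> connected_graph L \<and> verts L \<noteq> {}"
proof -
  assume a: "S_class 1 L \<or> B_class 1 L"
  have "in_G_step (S_class 0) (B_class 0) L"
  proof (cases "S_class 1 L")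
    case True then show ?thesis using SSuc[of 0 L] by simp
  next
    case False then show ?thesis using a BSuc[of 0 L] by simp
  qed
  then have "verts L \<noteq> {}" by (rule in_G_ne)
  moreover have "connected_graph L"
  proof (cases "S_class 1 L")
    case True then show ?thesis using S1_facts[OF True] by simp
  next
    case False then show ?thesis using a B1_facts[of L] by simp
  qed
  ultimately show ?thesis by blast
qed

lemma ig2: "S_class 2 H \<or> B_class 2 H \<Longrightarrow> in_G_step (S_class 1) (B_class 1) H"
proof -
  assume a: "S_class 2 H \<or> B_class 2 H"
  show ?thesis
  proof (cases "S_class 2 H")
    case True then show ?thesis using S2[of H] by simp
  next
    case False then show ?thesis using a B2[of H] by simp
  qed
qed

lemma sphere_facts:
  assumes a: "S_class 2 H \<or> B_class 2 H"
  shows "simple_graph H \<and> simply_connected H \<and> (\<forall>y\<in>verts H. S_class 1 (sphere H y) \<or> B_class 1 (sphere H y))"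
proof -
  have ig: "in_G_step (S_class 1) (B_class 1) H" using ig2[OF a] .
  have sg: "simple_graph H" using ig by (simp add: in_G_step_def)
  have sp: "\<forall>y\<in>verts H. S_class 1 (sphere H y) \<or> B_class 1 (sphere H y)" using ig by (simp add: in_G_step_def)
  have "simply_connected H"
  proof (cases "B_class 2 H")
    case True
    then have "contractible H" using B2[of H] by simp
    then show ?thesis by (rule contr_sc)
  next
    case False
    then have s: "S_class 2 H" using a by blast
    obtain x where x: "x \<in> verts H" using in_G_ne[OF ig] by blast
    have "B_class 2 (induce H (verts H - {x}))" using s x S2[of H] by simp
    then have "contractible (induce H (verts H - {x}))" using B2[of "induce H (verts H - {x})"] by simp
    then have scx: "simply_connected (induce H (verts H - {x}))" by (rule contr_sc)
    have "S_class 1 (sphere H x) \<or> B_class 1 (sphere H x)" using sp x by blast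
    then have lf: "connected_graph (sphere H x) \<and> verts (sphere H x) \<noteq> {}" by (rule link_facts)
    then have "nbrs H x \<noteq> {}" by simp
    then show ?thesis using reroute[OF sg x _ _ scx] lf by blast
  qed
  then show ?thesis using sg sp by blast
qed

theorem mainTheorem11:
  fixes G :: "'a graph"
  assumes "G_class 3 G"
    and "simply_connected G"
    and "\<forall>a b. interior_edge G a b \<longrightarrow> even (edge_degree G a b)"
  shows "colorable 4 G"
proof -
  have ig: "in_G_step (S_class 2) (B_class 2) G" using assms(1) by (simp add: G_class_def)
  have sg: "simple_graph G" using ig by (simp add: in_G_step_def)
  have sp: "\<forall>b\<in>verts G. S_class 2 (sphere G b) \<or> B_class 2 (sphere G b)" using ig by (simp add: in_G_step_def)
  obtain x0 where x0: "x0 \<in> verts G" using in_G_ne[OF ig] by blast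
  have hyp: "simply_connected (sphere G b) \<and> (\<forall>y\<in>nbrs G b. connected_graph (sphere (sphere G b) y)
       \<and> bipartite (sphere (sphere G b) y) \<and> nbrs (sphere G b) y \<noteq> {})" if b: "b \<in> verts G" for b
  proof -
    have sf: "simple_graph (sphere G b) \<and> simply_connected (sphere G b) \<and>
      (\<forall>y\<in>verts (sphere G b). S_class 1 (sphere (sphere G b) y) \<or> B_class 1 (sphere (sphere G b) y))"
      using sp b sphere_facts[of "sphere G b"] by simp
    have "connected_graph (sphere (sphere G b) y) \<and> bipartite (sphere (sphere G b) y) \<and> nbrs (sphere G b) y \<noteq> {}"
      if y: "y \<in> nbrs G b" for y
    proof -
      let ?L = "sphere (sphere G b) y"
      have cl: "S_class 1 ?L \<or> B_class 1 ?L" using sf y by simp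
      have lf: "connected_graph ?L \<and> verts ?L \<noteq> {}" using link_facts[OF cl] .
      have "bipartite ?L"
      proof (cases "B_class 1 ?L")
        case True then show ?thesis using B1_facts[OF True] by simp
      next
        case False
        then have s1: "S_class 1 ?L" using cl by blast
        have f1: "simple_graph ?L \<and> connected_graph ?L \<and> (\<forall>x\<in>verts ?L. card (nbrs ?L x) = 2)"
          using S1_facts[OF s1] by blast
        then have "cycle_graph ?L" by (simp add: cycle_graph_def)
        then have "cycle_graph (edge_link G b y)" using sphere_sphere[OF y] by simp
        moreover have "(b,y) \<in> edges G" using y nbrs_iff[OF sg] by blast
        ultimately have "interior_edge G b y" by (simp add: interior_edge_def)
        then have "even (edge_degree G b y)" using assms(3) by blast
        then have "even (card (verts ?L))" using sphere_sphere[OF y] by (simp add: edge_degree_def)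
        then show ?thesis by (rule S1_even_bip[OF s1])
      qed
      moreover have "nbrs (sphere G b) y \<noteq> {}" using lf by simp
      ultimately show ?thesis using lf by blast
    qed
    then show ?thesis using sf by blast
  qed
  have nx0: "nbrs G x0 \<noteq> {}"
  proof -
    have "S_class 2 (sphere G x0) \<or> B_class 2 (sphere G x0)" using sp x0 by blast
    then have "in_G_step (S_class 1) (B_class 1) (sphere G x0)" by (rule ig2)
    then have "verts (sphere G x0) \<noteq> {}" by (rule in_G_ne)
    then show ?thesis by simp
  qed
  have "\<forall>b\<in>verts G. simply_connected (sphere G b) \<and> (\<forall>y\<in>nbrs G b. connected_graph (sphere (sphere G b) y)
       \<and> bipartite (sphere (sphere G b) y) \<and> nbrs (sphere G b) y \<noteq> {})" using hyp by blast
  then show ?thesis using threeD[OF sg assms(2) _ x0 nx0] by blast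
qed


end
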